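(* Consider $L$ receivers $i=1,\dots,L$, each with a reference measurement vector $\mathbf{r}_i\in\mathbb{C}^N$ and a surveillance measurement vector $\mathbf{s}_i\in\mathbb{C}^N$, under two hypotheses: $$\mathcal{H}_1:\ \mathbf{r}_i=\beta_i\mathbf{x}+\boldsymbol{\delta}_{r,i},\quad \mathbf{s}_i=\alpha_i\mathbf{x}+\boldsymbol{\delta}_{s,i};\qquad \mathcal{H}_0:\ \mathbf{r}_i=\beta_i\mathbf{x}+\boldsymbol{\delta}_{r,i},\quad \mathbf{s}_i=\boldsymbol{\delta}_{s,i}.$$ Here $\mathbf{U}_D\in\mathbb{C}^{N\times D}$ has full column rank, $\mathbf{x}=\mathbf{U}_D\boldsymbol{\theta}_D\sim\mathcal{CN}(\mathbf{0},\mathbf{U}_D\boldsymbol{\Sigma}_{\theta}\mathbf{U}_D^{\mathsf H})$ with $\boldsymbol{\Sigma}_\theta=\mathrm{Cov}(\boldsymbol{\theta}_D)$; $\alpha_i\sim\mathcal{CN}(0,\sigma_\alpha^2)$; $\beta_i\sim\mathcal{CN}(\mu_\beta,\sigma_\beta^2)$; $\boldsymbol{\delta}_{r,i}\sim\mathcal{CN}(\mathbf{0},\boldsymbol{\Sigma}_r)$, $\boldsymbol{\delta}_{s,i}\sim\mathcal{CN}(\mathbf{0},\boldsymbol{\Sigma}_s)$ with $\boldsymbol{\Sigma}_r,\boldsymbol{\Sigma}_s$ Hermitian positive definite; and $\mathbf{x}$, all $\alpha_i$, all $\beta_i$, all $\boldsymbol{\delta}_{r,i}$ and all $\boldsymbol{\delta}_{s,i}$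 ($i=1,\dots,L$) are mutually independent. Define $$\mathbf{C}_r=(\mathbf{U}_D^{\mathsf H}\boldsymbol{\Sigma}_r^{-1}\mathbf{U}_D)^{-1},\quad \mathbf{C}_s=(\mathbf{U}_D^{\mathsf H}\boldsymbol{\Sigma}_s^{-1}\mathbf{U}_D)^{-1},\quad \mathbf{T}_r=\mathbf{C}_r\mathbf{U}_D^{\mathsf H}\boldsymbol{\Sigma}_r^{-1/2},\quad \mathbf{T}_s=\mathbf{C}_s\mathbf{U}_D^{\mathsf H}\boldsymbol{\Sigma}_s^{-1/2},$$ $$\mathbf{M}_{\mathbf U}=\mathbf{U}_D^{\mathsf H}\boldsymbol{\Sigma}_r^{-1/2}\boldsymbol{\Sigma}_s^{-1/2}\mathbf{U}_D,\quad \tilde{\mathbf r}_i=\mathbf{T}_r\boldsymbol{\Sigma}_r^{-1/2}\mathbf{r}_i,\quad \tilde{\mathbf s}_i=\mathbf{T}_s\boldsymbol{\Sigma}_s^{-1/2}\mathbf{s}_i,\quad c_i=\tilde{\mathbf r}_i^{\mathsf H}\mathbf{M}_{\mathbf U}\tilde{\mathbf s}_i.$$ Then, writing $\mathrm{Var}(c)=\mathbb{E}|c-\mathbb{E}c|^2$ and $\mathrm{Cov}(c,c')=\mathbb{E}[(c-\mathbb{E}c)(c'-\mathbb{E}c')^*]$, $$\sigma_{c,0}^2:=\mathrm{Var}(c_i\mid\mathcal{H}_0)=(|\mu_\beta|^2+\sigma_\beta^2)\,\mathrm{tr}(\mathbf{M}_{\mathbf U}\mathbf{C}_s\mathbf{M}_{\mathbf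 U}^{\mathsf H}\boldsymbol{\Sigma}_\theta)+\mathrm{tr}(\mathbf{M}_{\mathbf U}\mathbf{C}_s\mathbf{M}_{\mathbf U}^{\mathsf H}\mathbf{C}_r),$$ $$\sigma_{c,1}^2:=\mathrm{Var}(c_i\mid\mathcal{H}_1)=\sigma_{c,0}^2+\sigma_\alpha^2\,\mathrm{tr}(\mathbf{M}_{\mathbf U}^{\mathsf H}\mathbf{C}_r\mathbf{M}_{\mathbf U}\boldsymbol{\Sigma}_\theta)+\sigma_\alpha^2(|\mu_\beta|^2+\sigma_\beta^2)\Big(\mathrm{tr}(\mathbf{M}_{\mathbf U}\boldsymbol{\Sigma}_\theta\mathbf{M}_{\mathbf U}^{\mathsf H}\boldsymbol{\Sigma}_\theta)+|\mathrm{tr}(\mathbf{M}_{\mathbf U}\boldsymbol{\Sigma}_\theta)|^2\Big),$$ and $\mathrm{Cov}(c_i,c_j\mid\mathcal{H}_\ell)=0$ for $\ell\in\{0,1\}$ and all $i\neq j$.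
   Context: $\mathcal{CN}(\mathbf{m},\boldsymbol{\Sigma})$ denotes the proper (circularly symmetric about its mean) complex Gaussian distribution with mean $\mathbf m$ and covariance $\boldsymbol\Sigma$. $\boldsymbol{\Sigma}^{-1/2}$ denotes the inverse of the Hermitian positive definite square root of $\boldsymbol\Sigma$. $(\cdot)^{\mathsf H}$ is conjugate transpose, $(\cdot)^*$ complex conjugate, $\mathrm{tr}$ the trace. Conditioning on $\mathcal{H}_\ell$ means the measurements are generated by the model of hypothesis $\mathcal{H}_\ell$. In the paper $\mathbf{x}=\mathbf{U}_D\boldsymbol\theta_D$ (a waveform in a known $D$-dimensional subspace, with $\boldsymbol\theta_D$ zero-mean with covariance $\boldsymbol\Sigma_\theta$) is approximated as complex Gaussian for the purposes of this result. *)

theory Defs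
  imports "HOL-Probability.Probability"
begin

section \<open>Complex matrix notions (matrices as complex^'c^'r, i.e. rows indexed by 'r)\<close>

definition cinner :: "complex^'n \<Rightarrow> complex^'n \<Rightarrow> complex" where
  "cinner a z = (\<Sum>k\<in>UNIV. cnj (a$k) * z$k)"

definition adjoint_mat :: "complex^'c^'r \<Rightarrow> complex^'r^'c" where
  "adjoint_mat A = (\<chi> i j. cnj (A$j$i))"

definition hermitian :: "complex^'n^'n \<Rightarrow> bool" where
  "hermitian A \<longleftrightarrow> adjoint_mat A = A"

definition pos_def :: "complex^'n^'n \<Rightarrow> bool" where
  "pos_def A \<longleftrightarrow> hermitian A \<and> (\<forall>v. v \<noteq> 0 \<longrightarrow> Re (cinner v (A *v v)) > 0)"

definition pos_semidef :: "complex^'n^'n \<Rightarrow> bool" where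
  "pos_semidef A \<longleftrightarrow> hermitian A \<and> (\<forall>v. Re (cinner v (A *v v)) \<ge> 0)"

definition sqrt_mat :: "complex^'n^'n \<Rightarrow> complex^'n^'n" where
  "sqrt_mat A = (THE B. pos_def B \<and> B ** B = A)"

definition inv_sqrt_mat :: "complex^'n^'n \<Rightarrow> complex^'n^'n" where
  "inv_sqrt_mat A = matrix_inv (sqrt_mat A)"

definition full_column_rank :: "complex^'d^'n \<Rightarrow> bool" where
  "full_column_rank U \<longleftrightarrow> (\<forall>v. U *v v = 0 \<longrightarrow> v = 0)"

definition real_normal :: "real \<Rightarrow> real \<Rightarrow> real measure" where
  "real_normal m v = (if v = 0 then return borel m
                      else density lborel (normal_density m (sqrt v)))"

text \<open>Z ~ CN(m, S): Z is measurable and, for every a, Re(a^H Z) ~ N(Re(a^H m), a^H S a / 2).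
  (Cramer-Wold characterisation of the proper complex Gaussian law.)\<close>
definition is_CN :: "'w measure \<Rightarrow> ('w \<Rightarrow> complex^'n) \<Rightarrow> complex^'n \<Rightarrow> complex^'n^'n \<Rightarrow> bool" where
  "is_CN M Z m S \<longleftrightarrow> Z \<in> borel_measurable M \<and>
     (\<forall>a. distr M borel (\<lambda>w. Re (cinner a (Z w)))
            = real_normal (Re (cinner a m)) (Re (cinner a (S *v a)) / 2))"

definition is_CN1 :: "'w measure \<Rightarrow> ('w \<Rightarrow> complex) \<Rightarrow> complex \<Rightarrow> real \<Rightarrow> bool" where
  "is_CN1 M z m v \<longleftrightarrow> z \<in> borel_measurable M \<and>
     (\<forall>a. distr M borel (\<lambda>w. Re (cnj a * z w))
            = real_normal (Re (cnj a * m)) ((cmod a)\<^sup>2 * v / 2))"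

definition cvar :: "'w measure \<Rightarrow> ('w \<Rightarrow> complex) \<Rightarrow> real" where
  "cvar M X = (\<integral>w. (cmod (X w - (\<integral>u. X u \<partial>M)))\<^sup>2 \<partial>M)"

definition ccov :: "'w measure \<Rightarrow> ('w \<Rightarrow> complex) \<Rightarrow> ('w \<Rightarrow> complex) \<Rightarrow> complex" where
  "ccov M X Y = (\<integral>w. (X w - (\<integral>u. X u \<partial>M)) * cnj (Y w - (\<integral>u. Y u \<partial>M)) \<partial>M)"

datatype rv_idx = IX | IAlpha nat | IBeta nat | IDr nat | IDs nat

definition gen_events :: "'w measure \<Rightarrow> ('w \<Rightarrow> 'b::topological_space) \<Rightarrow> 'w set set" where
  "gen_events M X = {X -` A \<inter> space M | A. A \<in> sets borel}"

definition model_indep ::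
  "'w measure \<Rightarrow> nat \<Rightarrow> ('w \<Rightarrow> complex^'n) \<Rightarrow> (nat \<Rightarrow> 'w \<Rightarrow> complex) \<Rightarrow> (nat \<Rightarrow> 'w \<Rightarrow> complex)
     \<Rightarrow> (nat \<Rightarrow> 'w \<Rightarrow> complex^'n) \<Rightarrow> (nat \<Rightarrow> 'w \<Rightarrow> complex^'n) \<Rightarrow> bool" where
  "model_indep M L x al be dr ds \<longleftrightarrow>
     prob_space.indep_sets M
       (\<lambda>k. case k of IX \<Rightarrow> gen_events M x
                    | IAlpha i \<Rightarrow> gen_events M (al i)
                    | IBeta i \<Rightarrow> gen_events M (be i)
                    | IDr i \<Rightarrow> gen_events M (dr i)
                    | IDs i \<Rightarrow> gen_events M (ds i))
       ({IX} \<union> IAlpha ` {..<L} \<union> IBeta ` {..<L} \<union> IDr ` {..<L} \<union> IDs ` {..<L})"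

definition C_mat :: "complex^'d^'n \<Rightarrow> complex^'n^'n \<Rightarrow> complex^'d^'d" where
  "C_mat U S = matrix_inv (adjoint_mat U ** matrix_inv S ** U)"

definition T_mat :: "complex^'d^'n \<Rightarrow> complex^'n^'n \<Rightarrow> complex^'n^'d" where
  "T_mat U S = C_mat U S ** adjoint_mat U ** inv_sqrt_mat S"

definition M_U :: "complex^'d^'n \<Rightarrow> complex^'n^'n \<Rightarrow> complex^'n^'n \<Rightarrow> complex^'d^'d" where
  "M_U U Sr Ss = adjoint_mat U ** inv_sqrt_mat Sr ** inv_sqrt_mat Ss ** U"

definition c_stat :: "complex^'d^'n \<Rightarrow> complex^'n^'n \<Rightarrow> complex^'n^'n \<Rightarrow> complex^'n \<Rightarrow> complex^'n \<Rightarrow> complex" where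
  "c_stat U Sr Ss r s =
     cinner (T_mat U Sr *v (inv_sqrt_mat Sr *v r)) (M_U U Sr Ss *v (T_mat U Ss *v (inv_sqrt_mat Ss *v s)))"

text \<open>Measurements; the flag h selects the hypothesis (True = H1, False = H0).\<close>
definition meas_r :: "('w \<Rightarrow> complex^'n) \<Rightarrow> (nat \<Rightarrow> 'w \<Rightarrow> complex) \<Rightarrow> (nat \<Rightarrow> 'w \<Rightarrow> complex^'n)
     \<Rightarrow> nat \<Rightarrow> 'w \<Rightarrow> complex^'n" where
  "meas_r x be dr i w = be i w *s x w + dr i w"

definition meas_s :: "bool \<Rightarrow> ('w \<Rightarrow> complex^'n) \<Rightarrow> (nat \<Rightarrow> 'w \<Rightarrow> complex) \<Rightarrow> (nat \<Rightarrow> 'w \<Rightarrow> complex^'n)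
     \<Rightarrow> nat \<Rightarrow> 'w \<Rightarrow> complex^'n" where
  "meas_s h x al ds i w = (if h then al i w *s x w + ds i w else ds i w)"

end

theory Submission
  imports Defs
begin


lemma cinner_add_left: "cinner (a + b) z = cinner a z + cinner b z"
  by (simp add: cinner_def sum.distrib distrib_right)
lemma cinner_add_right: "cinner a (y + z) = cinner a y + cinner a z"
  by (simp add: cinner_def sum.distrib distrib_left)
lemma cinner_diff_left: "cinner (a - b) z = cinner a z - cinner b z"
  by (simp add: cinner_def sum_subtractf left_diff_distrib)
lemma cinner_diff_right: "cinner a (y - z) = cinner a y - cinner a z"
  by (simp add: cinner_def sum_subtractf right_diff_distrib)
lemma cinner_minus_left: "cinner (- a) z = - cinner a z"
  by (simp add: cinner_def sum_negf)
lemma cinner_minus_right: "cinner a (- z) = - cinner a z"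
  by (simp add: cinner_def sum_negf)
lemma cinner_scale_left: "cinner (c *s a) z = cnj c * cinner a z"
  by (simp add: cinner_def sum_distrib_left mult_ac)
lemma cinner_scale_right: "cinner a (c *s z) = c * cinner a z"
  by (simp add: cinner_def sum_distrib_left mult_ac)
lemma cinner_zero_left[simp]: "cinner 0 z = 0"
  by (simp add: cinner_def)
lemma cinner_zero_right[simp]: "cinner a 0 = 0"
  by (simp add: cinner_def)
lemma cinner_sum_left: "cinner (\<Sum>i\<in>S. f i) z = (\<Sum>i\<in>S. cinner (f i) z)"
  by (induction S rule: infinite_finite_induct) (auto simp: cinner_add_left)
lemma cinner_sum_right: "cinner a (\<Sum>i\<in>S. f i) = (\<Sum>i\<in>S. cinner a (f i))"
  by (induction S rule: infinite_finite_induct) (auto simp: cinner_add_right)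
lemma cnj_cinner: "cnj (cinner a z) = cinner z a"
  by (simp add: cinner_def mult.commute)

lemma cinner_self: "cinner v v = complex_of_real ((norm v)\<^sup>2)"
proof -
  have "cinner v v = (\<Sum>k\<in>UNIV. complex_of_real ((cmod (v$k))\<^sup>2))"
    unfolding cinner_def by (intro sum.cong refl) (metis complex_norm_square mult.commute)
  also have "\<dots> = complex_of_real ((norm v)\<^sup>2)"
    by (simp add: norm_vec_def L2_set_def sum_nonneg)
  finally show ?thesis .
qed

lemma cinner_self_eq_0[simp]: "cinner v v = 0 \<longleftrightarrow> v = 0"
  by (simp add: cinner_self)

lemma Re_cinner_self: "Re (cinner v v) = (norm v)\<^sup>2"
  by (simp add: cinner_self)
lemma Im_cinner_self: "Im (cinner v v) = 0"
  by (simp add: cinner_self)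

lemma inner_Re_cinner: "inner u v = Re (cinner u v)"
  by (simp add: inner_vec_def cinner_def inner_complex_def Re_sum)

lemma adjoint_nth[simp]: "adjoint_mat A $ i $ j = cnj (A $ j $ i)"
  by (simp add: adjoint_mat_def)

lemma adjoint_adjoint[simp]: "adjoint_mat (adjoint_mat A) = A"
  by (simp add: vec_eq_iff)

lemma adjoint_mult: "adjoint_mat (A ** B) = adjoint_mat B ** adjoint_mat A"
  by (simp add: vec_eq_iff matrix_matrix_mult_def adjoint_mat_def mult.commute)

lemma adjoint_mat1[simp]: "adjoint_mat (mat 1) = (mat 1 :: complex^'n^'n)"
  by (simp add: vec_eq_iff mat_def)

lemma adjoint_add: "adjoint_mat (A + B) = adjoint_mat A + adjoint_mat B"
  by (simp add: vec_eq_iff)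

lemma cinner_matrix_left: "cinner (A *v u) v = cinner u (adjoint_mat A *v v)"
proof -
  have "cinner (A *v u) v = (\<Sum>k\<in>UNIV. \<Sum>j\<in>UNIV. cnj (A$k$j) * cnj (u$j) * v$k)"
    by (simp add: cinner_def matrix_vector_mult_def sum_distrib_right)
  also have "\<dots> = (\<Sum>j\<in>UNIV. \<Sum>k\<in>UNIV. cnj (A$k$j) * cnj (u$j) * v$k)"
    by (rule sum.swap)
  also have "\<dots> = cinner u (adjoint_mat A *v v)"
    by (simp add: cinner_def matrix_vector_mult_def sum_distrib_left adjoint_mat_def mult_ac)
  finally show ?thesis .
qed

lemma cinner_matrix_right: "cinner u (A *v v) = cinner (adjoint_mat A *v u) v"
  by (simp add: cinner_matrix_left)

lemma hermitian_cinner: "hermitian A \<Longrightarrow> cinner (A *v u) v = cinner u (A *v v)"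
  by (simp add: hermitian_def cinner_matrix_left)

lemma hermitian_real: "hermitian A \<Longrightarrow> Im (cinner v (A *v v)) = 0"
proof -
  assume h: "hermitian A"
  have "cnj (cinner v (A *v v)) = cinner v (A *v v)"
    by (simp add: cnj_cinner hermitian_cinner[OF h])
  thus ?thesis by (metis Reals_cnj_iff complex_is_Real_iff)
qed

lemma matrix_eq_cinner:
  fixes A B :: "complex^'n^'m"
  assumes "\<And>u v. cinner u (A *v v) = cinner u (B *v v)" shows "A = B"
proof -
  have "\<And>v. A *v v = B *v v"
  proof -
    fix v
    have "cinner (A *v v - B *v v) (A *v v - B *v v) = 0"
      by (simp add: cinner_diff_right assms)
    thus "A *v v = B *v v" by simp
  qed
  thus ?thesis by (simp add: matrix_eq)
qed

lemma matrix_inv_props: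
  fixes A :: "'a::field^'n^'n"
  assumes "invertible A"
  shows "A ** matrix_inv A = mat 1" "matrix_inv A ** A = mat 1"
proof -
  have "\<exists>A'. A ** A' = mat 1 \<and> A' ** A = mat 1" using assms invertible_def by blast
  from someI_ex[OF this] show "A ** matrix_inv A = mat 1" "matrix_inv A ** A = mat 1"
    unfolding matrix_inv_def by auto
qed

lemma matrix_inv_unique:
  fixes A :: "'a::field^'n^'n"
  assumes "A ** B = mat 1" shows "matrix_inv A = B"
proof -
  have inv: "invertible A" using assms invertible_right_inverse by blast
  have "matrix_inv A = matrix_inv A ** (A ** B)" using assms by simp
  also have "\<dots> = B" by (simp add: matrix_mul_assoc matrix_inv_props(2)[OF inv])
  finally show ?thesis .
qed

lemma invertible_inj:
  fixes A :: "'a::field^'n^'n"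
  assumes "\<And>v. A *v v = 0 \<Longrightarrow> v = 0" shows "invertible A"
  using assms matrix_left_invertible_ker invertible_left_inverse by blast

lemma pos_def_inj: "pos_def A \<Longrightarrow> A *v v = 0 \<Longrightarrow> v = 0"
  unfolding pos_def_def by (metis cinner_zero_right less_irrefl zero_complex.sel(1))

lemma pos_def_invertible: "pos_def A \<Longrightarrow> invertible A"
  by (metis invertible_inj pos_def_inj)


lemma mv_scale: "(A::complex^'n^'m) *v (c *s v) = c *s (A *v v)"
  by (simp add: vec_eq_iff matrix_vector_mult_def sum_distrib_left mult_ac)
lemma mv_add: "(A::complex^'n^'m) *v (u + v) = A *v u + A *v v"
  by (simp add: matrix_vector_right_distrib)
lemma mv_diff: "(A::complex^'n^'m) *v (u - v) = A *v u - A *v v"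
  by (simp add: vec_eq_iff matrix_vector_mult_def sum_subtractf right_diff_distrib)
lemma mv_sum: "(A::complex^'n^'m) *v (\<Sum>i\<in>S. f i) = (\<Sum>i\<in>S. A *v f i)"
  by (induction S rule: infinite_finite_induct) (auto simp: mv_add)

definition orthonormal_on :: "(nat \<Rightarrow> complex^'n) \<Rightarrow> nat \<Rightarrow> bool" where
  "orthonormal_on f m \<longleftrightarrow> (\<forall>i<m. \<forall>j<m. cinner (f i) (f j) = (if i = j then 1 else 0))"

lemma cinner_sum_scale_right:
  "cinner a (\<Sum>i\<in>S. c i *s f i) = (\<Sum>i\<in>S. c i * cinner a (f i))"
  by (simp add: cinner_sum_right cinner_scale_right)

lemma ON_proj:
  assumes "orthonormal_on f m" "j < m"
  shows "cinner (f j) (\<Sum>i<m. c i *s f i) = c j"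
proof -
  have "cinner (f j) (\<Sum>i<m. c i *s f i) = (\<Sum>i<m. c i * (if j = i then 1 else 0))"
    using assms unfolding orthonormal_on_def
    by (simp add: cinner_sum_scale_right)
  also have "\<dots> = c j" using assms(2) by (simp add: if_distrib cong: if_cong)
  finally show ?thesis .
qed

lemma ON_resid:
  assumes "orthonormal_on f m" "j < m"
  shows "cinner (f j) (v - (\<Sum>i<m. cinner (f i) v *s f i)) = 0"
  using ON_proj[OF assms] by (simp add: cinner_diff_right)

lemma ON_inj: "orthonormal_on f m \<Longrightarrow> inj_on f {..<m}"
  unfolding orthonormal_on_def inj_on_def by (metis lessThan_iff one_neq_zero)

lemma ON_bound:
  fixes f :: "nat \<Rightarrow> complex^'n"
  assumes "orthonormal_on f m" shows "m \<le> CARD('n)"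
proof -
  have inj: "inj_on f {..<m}" using ON_inj[OF assms] .
  have ind: "vec.independent (f ` {..<m})"
  proof (rule vec.independent_if_scalars_zero)
    show "finite (f ` {..<m})" by simp
    fix g x assume s: "(\<Sum>y\<in>f ` {..<m}. g y *s y) = 0" and x: "x \<in> f ` {..<m}"
    then obtain j where j: "j < m" "x = f j" by auto
    have "0 = cinner x (\<Sum>y\<in>f ` {..<m}. g y *s y)" using s by simp
    also have "\<dots> = (\<Sum>y\<in>f ` {..<m}. g y * cinner x y)" by (simp add: cinner_sum_scale_right)
    also have "\<dots> = (\<Sum>i<m. g (f i) * cinner (f j) (f i))"
      by (simp add: sum.reindex[OF inj] j)
    also have "\<dots> = (\<Sum>i<m. g (f i) * (if j = i then 1 else 0))"
      using assms j unfolding orthonormal_on_def by (intro sum.cong) auto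
    also have "\<dots> = g x" using j by (simp add: if_distrib cong: if_cong)
    finally show "g x = 0" by simp
  qed
  have "card (f ` {..<m}) \<le> vec.dim (UNIV :: (complex^'n) set)"
    by (rule vec.independent_card_le_dim[OF _ ind]) simp
  thus ?thesis by (metis vec_dim_card card_image[OF inj] card_lessThan)
qed

lemma ON_extend:
  assumes "orthonormal_on f m" "cinner w w = 1" "\<And>i. i < m \<Longrightarrow> cinner (f i) w = 0"
  shows "orthonormal_on (f(m := w)) (Suc m)"
  using assms unfolding orthonormal_on_def
  by (auto simp: less_Suc_eq) (metis cnj_cinner complex_cnj_zero)+

lemma ON_exists_perp:
  fixes f :: "nat \<Rightarrow> complex^'n"
  assumes "orthonormal_on f m" "m < CARD('n)"
  shows "\<exists>w. cinner w w = 1 \<and> (\<forall>i<m. cinner (f i) w = 0)"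
proof (rule ccontr)
  assume na: "\<not> ?thesis"
  have "\<And>v. v \<in> vec.span (f ` {..<m})"
  proof -
    fix v :: "complex^'n"
    define w where "w = v - (\<Sum>i<m. cinner (f i) v *s f i)"
    have perp: "\<forall>i<m. cinner (f i) w = 0" using ON_resid[OF assms(1)] w_def by simp
    have "w = 0"
    proof (rule ccontr)
      assume "w \<noteq> 0"
      define r where "r = norm w"
      have r: "r > 0" using \<open>w \<noteq> 0\<close> r_def by simp
      define w' where "w' = complex_of_real (1 / r) *s w"
      have "cinner w' w' = complex_of_real (1/r) * complex_of_real (1/r) * cinner w w"
        by (simp add: w'_def cinner_scale_left cinner_scale_right)
      also have "\<dots> = 1" using r by (simp add: cinner_self r_def power2_eq_square field_simps)
      finally have "cinner w' w' = 1" .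
      moreover have "\<forall>i<m. cinner (f i) w' = 0" using perp by (simp add: w'_def cinner_scale_right)
      ultimately show False using na by blast
    qed
    hence "v = (\<Sum>i<m. cinner (f i) v *s f i)" using w_def by simp
    also have "\<dots> \<in> vec.span (f ` {..<m})"
      by (intro vec.span_sum vec.span_scale vec.span_base) auto
    finally show "v \<in> vec.span (f ` {..<m})" .
  qed
  hence "(UNIV :: (complex^'n) set) \<subseteq> vec.span (f ` {..<m})" by auto
  hence "vec.dim (UNIV :: (complex^'n) set) \<le> card (f ` {..<m})"
    by (intro vec.dim_le_card) auto
  also have "\<dots> \<le> m" using card_image_le[of "{..<m}" f] by simp
  finally show False using assms(2) by (metis vec_dim_card not_le)
qed

lemma ON_complete:
  fixes f :: "nat \<Rightarrow> complex^'n"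
  assumes "orthonormal_on f (CARD('n))"
  shows "v = (\<Sum>i<CARD('n). cinner (f i) v *s f i)"
proof (rule ccontr)
  let ?n = "CARD('n)"
  assume ne: "v \<noteq> (\<Sum>i<?n. cinner (f i) v *s f i)"
  define w where "w = v - (\<Sum>i<?n. cinner (f i) v *s f i)"
  have perp: "\<And>i. i < ?n \<Longrightarrow> cinner (f i) w = 0" using ON_resid[OF assms] w_def by simp
  have "w \<noteq> 0" using ne w_def by simp
  define r where "r = norm w"
  have r: "r > 0" using \<open>w \<noteq> 0\<close> r_def by simp
  define w' where "w' = complex_of_real (1 / r) *s w"
  have "cinner w' w' = complex_of_real (1/r) * complex_of_real (1/r) * cinner w w"
    by (simp add: w'_def cinner_scale_left cinner_scale_right)
  also have "\<dots> = 1" using r by (simp add: cinner_self r_def power2_eq_square field_simps)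
  finally have "cinner w' w' = 1" .
  moreover have "\<And>i. i < ?n \<Longrightarrow> cinner (f i) w' = 0" using perp by (simp add: w'_def cinner_scale_right)
  ultimately have "orthonormal_on (f(?n := w')) (Suc ?n)" using ON_extend[OF assms] by blast
  from ON_bound[OF this] show False by simp
qed


lemma mv_nth: "(A *v w) $ k = (\<Sum>j\<in>UNIV. A$k$j * w$j)"
  by (simp add: matrix_vector_mult_def)

lemma real_lin_quad_zero:
  fixes a c :: real
  assumes "\<And>t. 2 * t * a \<le> t\<^sup>2 * c" shows "a = 0"
proof (rule ccontr)
  assume a: "a \<noteq> 0"
  define d where "d = \<bar>c\<bar> + 1"
  have d: "d > 0" "\<bar>c\<bar> < d" by (auto simp: d_def)
  define t where "t = a / (2 * d)"
  have "2 * t * a = a\<^sup>2 / d" using d by (simp add: t_def power2_eq_square field_simps)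
  moreover have "t\<^sup>2 * c \<le> t\<^sup>2 * \<bar>c\<bar>" by (intro mult_left_mono) auto
  moreover have "t\<^sup>2 * \<bar>c\<bar> = a\<^sup>2 * \<bar>c\<bar> / (4 * d\<^sup>2)" using d by (simp add: t_def power2_eq_square field_simps)
  moreover have "a\<^sup>2 * \<bar>c\<bar> / (4 * d\<^sup>2) < a\<^sup>2 / d"
  proof -
    have "a\<^sup>2 > 0" using a by simp
    have "a\<^sup>2 * \<bar>c\<bar> < a\<^sup>2 * (4 * d)" using \<open>a\<^sup>2 > 0\<close> d by (intro mult_strict_left_mono) auto
    thus ?thesis using d by (simp add: power2_eq_square field_simps)
  qed
  ultimately show False using assms[of t] by linarith
qed

lemma ofreal_scale_eq: "complex_of_real r *s (u::complex^'n) = r *\<^sub>R u"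
  by (auto simp: vec_eq_iff complex_eq_iff)

lemma cinner_real_scale_self: "cinner (complex_of_real r *s w) (A *v (complex_of_real r *s w)) = complex_of_real (r\<^sup>2) * cinner w (A *v w)"
  by (simp add: mv_scale cinner_scale_left cinner_scale_right power2_eq_square)

lemma eig_step:
  fixes A :: "complex^'n^'n" and f :: "nat \<Rightarrow> complex^'n"
  assumes herm: "hermitian A" and ON: "orthonormal_on f m" and m: "m < CARD('n)"
    and eig: "\<And>i. i < m \<Longrightarrow> \<exists>l. A *v f i = l *s f i"
  shows "\<exists>w. cinner w w = 1 \<and> (\<forall>i<m. cinner (f i) w = 0) \<and>
             A *v w = complex_of_real (Re (cinner w (A *v w))) *s w"
proof -
  define W where "W = {w. \<forall>i<m. cinner (f i) w = 0}"
  define Q where "Q = (\<lambda>w. Re (cinner w (A *v w)))"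
  have Wadd: "u + v \<in> W" if "u \<in> W" "v \<in> W" for u v
    using that by (simp add: W_def cinner_add_right)
  have Wscale: "c *s u \<in> W" if "u \<in> W" for u c
    using that by (simp add: W_def cinner_scale_right)
  have Wdiff: "u - v \<in> W" if "u \<in> W" "v \<in> W" for u v
    using that by (simp add: W_def cinner_diff_right)
  have contc: "continuous_on UNIV (\<lambda>w::complex^'n. cinner a w)" for a
    unfolding cinner_def by (intro continuous_on_sum continuous_on_mult continuous_on_const continuous_on_component continuous_on_id continuous_on_cnj continuous_on_Re)
  have closedW: "closed W"
  proof -
    have "W = (\<Inter>i<m. {w. cinner (f i) w = 0})" by (auto simp: W_def)
    moreover have "closed {w. cinner (f i) w = 0}" for i
      using closed_Collect_eq[OF contc[of "f i"] continuous_on_const] .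
    ultimately show ?thesis by auto
  qed
  define K where "K = W \<inter> sphere 0 1"
  have "compact K" unfolding K_def using closedW by auto
  obtain w1 where w1: "cinner w1 w1 = 1" "\<forall>i<m. cinner (f i) w1 = 0"
    using ON_exists_perp[OF ON m] by blast
  have "(norm w1)\<^sup>2 = 1" using w1(1) cinner_self[of w1] by (metis of_real_eq_1_iff)
  hence "norm w1 = 1" using norm_ge_zero[of w1] power2_eq_1_iff[of "norm w1"] by auto
  hence "w1 \<in> K" using w1 by (simp add: K_def W_def)
  hence "K \<noteq> {}" by auto
  have contQ: "continuous_on K Q"
    unfolding Q_def cinner_def mv_nth
    by (intro continuous_on_sum continuous_on_mult continuous_on_const continuous_on_component continuous_on_id continuous_on_cnj continuous_on_Re)
  obtain w0 where w0K: "w0 \<in> K" and w0max: "\<And>y. y \<in> K \<Longrightarrow> Q y \<le> Q w0"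
    using continuous_attains_sup[OF \<open>compact K\<close> \<open>K \<noteq> {}\<close> contQ] by blast
  define lam where "lam = Q w0"
  have w0W: "w0 \<in> W" and nw0: "norm w0 = 1" using w0K by (auto simp: K_def)
  have w0w0: "cinner w0 w0 = 1" using nw0 by (simp add: cinner_self)
  have realQ: "cinner v (A *v v) = complex_of_real (Q v)" for v
    using hermitian_real[OF herm, of v] by (simp add: Q_def complex_eq_iff)
  have bound: "Q u \<le> lam * (norm u)\<^sup>2" if "u \<in> W" for u
  proof (cases "u = 0")
    case True thus ?thesis by (simp add: Q_def)
  next
    case False
    define r where "r = 1 / norm u"
    have r: "r > 0" using False by (simp add: r_def)
    have "norm (complex_of_real r *s u) = 1"
      unfolding ofreal_scale_eq using r False by (simp add: r_def)
    hence "complex_of_real r *s u \<in> K"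
      using that by (simp add: K_def Wscale)
    hence "Q (complex_of_real r *s u) \<le> lam" using w0max lam_def by blast
    moreover have "Q (complex_of_real r *s u) = r\<^sup>2 * Q u"
      unfolding Q_def cinner_real_scale_self by simp
    ultimately have "r\<^sup>2 * Q u \<le> lam" by simp
    hence "(norm u)\<^sup>2 * (r\<^sup>2 * Q u) \<le> (norm u)\<^sup>2 * lam" by (intro mult_left_mono) auto
    moreover have "(norm u)\<^sup>2 * r\<^sup>2 = 1" using False by (simp add: r_def power2_eq_square)
    ultimately show ?thesis by (metis mult.assoc mult.commute mult_1)
  qed
  have key: "Re (cinner u (A *v w0)) = 0" if u: "u \<in> W" "cinner w0 u = 0" for u
  proof (rule real_lin_quad_zero)
    fix t :: real
    let ?a = "Re (cinner u (A *v w0))"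
    define v where "v = w0 + complex_of_real t *s u"
    have vW: "v \<in> W" unfolding v_def using w0W u by (intro Wadd Wscale)
    have cu: "cinner u w0 = 0" using u(2) by (metis cnj_cinner complex_cnj_zero)
    have "cinner v v = 1 + complex_of_real (t\<^sup>2) * cinner u u"
      unfolding v_def using u(2) cu w0w0
      by (simp add: cinner_add_left cinner_add_right cinner_scale_left cinner_scale_right power2_eq_square)
    hence "Re (cinner v v) = 1 + t\<^sup>2 * Re (cinner u u)" by simp
    hence nv: "(norm v)\<^sup>2 = 1 + t\<^sup>2 * (norm u)\<^sup>2" by (simp add: Re_cinner_self)
    have h1: "cinner w0 (A *v u) = cnj (cinner u (A *v w0))"
      by (simp add: cnj_cinner hermitian_cinner[OF herm])
    have "cinner v (A *v v) = cinner w0 (A *v w0) + complex_of_real t * cinner w0 (A *v u)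
          + complex_of_real t * cinner u (A *v w0) + complex_of_real (t\<^sup>2) * cinner u (A *v u)"
      unfolding v_def
      by (simp add: mv_add mv_scale cinner_add_left cinner_add_right cinner_scale_left cinner_scale_right
          power2_eq_square distrib_left mult.assoc)
    hence "Q v = lam + 2 * t * ?a + t\<^sup>2 * Q u"
      unfolding h1 by (simp add: Q_def lam_def)
    moreover have "Q v \<le> lam * (1 + t\<^sup>2 * (norm u)\<^sup>2)" using bound[OF vW] nv by simp
    ultimately show "2 * t * ?a \<le> t\<^sup>2 * (lam * (norm u)\<^sup>2 - Q u)"
      by (simp add: algebra_simps)
  qed
  have key2: "cinner u (A *v w0) = 0" if u: "u \<in> W" "cinner w0 u = 0" for u
  proof -
    have "Re (cinner u (A *v w0)) = 0" using key[OF u] .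
    moreover have "Re (cinner (\<i> *s u) (A *v w0)) = 0"
      using u by (intro key) (auto simp: Wscale cinner_scale_right)
    hence "Im (cinner u (A *v w0)) = 0" by (simp add: cinner_scale_left)
    ultimately show ?thesis by (simp add: complex_eq_iff)
  qed
  define z where "z = A *v w0 - complex_of_real lam *s w0"
  have Aw0W: "A *v w0 \<in> W"
  proof -
    have "cinner (f i) (A *v w0) = 0" if "i < m" for i
    proof -
      from eig[OF that] obtain l where l: "A *v f i = l *s f i" by blast
      have "cinner (f i) (A *v w0) = cinner (A *v f i) w0" by (simp add: hermitian_cinner[OF herm])
      also have "\<dots> = 0" using w0W that by (simp add: l cinner_scale_left W_def)
      finally show ?thesis .
    qed
    thus ?thesis by (simp add: W_def)
  qed
  have zW: "z \<in> W" unfolding z_def using Aw0W w0W by (intro Wdiff Wscale)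
  have "cinner w0 z = 0"
    unfolding z_def using realQ[of w0] w0w0 by (simp add: cinner_diff_right cinner_scale_right lam_def)
  hence zA: "cinner z (A *v w0) = 0" using key2[OF zW] by simp
  have zw0: "cinner z w0 = 0" using \<open>cinner w0 z = 0\<close> by (metis cnj_cinner complex_cnj_zero)
  have "cinner z z = 0"
    by (subst (2) z_def) (simp add: cinner_diff_right cinner_scale_right zA zw0)
  hence "z = 0" by simp
  hence "A *v w0 = complex_of_real (Re (cinner w0 (A *v w0))) *s w0"
    by (simp add: z_def lam_def Q_def)
  thus ?thesis using w0w0 w0W by (auto simp: W_def)
qed


lemma mult_cnj_self: "z * cnj z = complex_of_real ((cmod z)\<^sup>2)"
  by (metis complex_norm_square of_real_power)

lemma spectral_ex:
  fixes A :: "complex^'n^'n"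
  assumes herm: "hermitian A"
  shows "m \<le> CARD('n) \<Longrightarrow> \<exists>f lam. orthonormal_on f m \<and> (\<forall>i<m. A *v f i = complex_of_real (lam i) *s f i)"
proof (induction m)
  case 0 thus ?case by (auto simp: orthonormal_on_def)
next
  case (Suc m)
  then obtain f lam where ON: "orthonormal_on f m" and ev: "\<forall>i<m. A *v f i = complex_of_real (lam i) *s f i"
    by auto
  have "\<exists>w. cinner w w = 1 \<and> (\<forall>i<m. cinner (f i) w = 0) \<and>
             A *v w = complex_of_real (Re (cinner w (A *v w))) *s w"
    using Suc.prems ev by (intro eig_step[OF herm ON]) auto
  then obtain w where w: "cinner w w = 1" "\<forall>i<m. cinner (f i) w = 0"
    "A *v w = complex_of_real (Re (cinner w (A *v w))) *s w" by blast
  have "orthonormal_on (f(m := w)) (Suc m)" using ON_extend[OF ON w(1)] w(2) by blast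
  moreover have "\<forall>i<Suc m. A *v (f(m := w)) i = complex_of_real ((lam(m := Re (cinner w (A *v w)))) i) *s (f(m := w)) i"
    using ev w(3) by (auto simp: less_Suc_eq)
  ultimately show ?case by blast
qed

definition spec_mat :: "(nat \<Rightarrow> complex^'n) \<Rightarrow> (nat \<Rightarrow> complex) \<Rightarrow> nat \<Rightarrow> complex^'n^'n" where
  "spec_mat f s m = (\<chi> r c. \<Sum>i<m. s i * (f i)$r * cnj ((f i)$c))"

lemma spec_mat_mv: "spec_mat f s m *v v = (\<Sum>i<m. (s i * cinner (f i) v) *s f i)"
proof -
  have "(spec_mat f s m *v v)$r = (\<Sum>i<m. (s i * cinner (f i) v) * (f i)$r)" for r
  proof -
    have "(spec_mat f s m *v v)$r = (\<Sum>c\<in>UNIV. \<Sum>i<m. s i * (f i)$r * cnj ((f i)$c) * v$c)"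
      by (simp add: spec_mat_def matrix_vector_mult_def sum_distrib_right)
    also have "\<dots> = (\<Sum>i<m. \<Sum>c\<in>UNIV. s i * (f i)$r * cnj ((f i)$c) * v$c)" by (rule sum.swap)
    also have "\<dots> = (\<Sum>i<m. (s i * cinner (f i) v) * (f i)$r)"
      by (simp add: cinner_def sum_distrib_left sum_distrib_right mult_ac)
    finally show ?thesis .
  qed
  thus ?thesis by (simp add: vec_eq_iff sum_component)
qed

lemma spec_mat_adjoint: "adjoint_mat (spec_mat f s m) = spec_mat f (\<lambda>i. cnj (s i)) m"
  by (simp add: vec_eq_iff spec_mat_def adjoint_mat_def mult_ac)

lemma ON_spec_coord:
  assumes "orthonormal_on f m" "j < m"
  shows "cinner (f j) (spec_mat f s m *v v) = s j * cinner (f j) v"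
  unfolding spec_mat_mv using ON_proj[OF assms, of "\<lambda>i. s i * cinner (f i) v"] by simp

lemma mv_ON_expand:
  fixes f :: "nat \<Rightarrow> complex^'n" and A :: "complex^'n^'n"
  assumes ON: "orthonormal_on f (CARD('n))"
    and ev: "\<And>i. i < CARD('n) \<Longrightarrow> A *v f i = l i *s f i"
  shows "A = spec_mat f l (CARD('n))"
proof -
  have "A *v v = spec_mat f l (CARD('n)) *v v" for v
  proof -
    have "A *v v = A *v (\<Sum>i<CARD('n). cinner (f i) v *s f i)" using ON_complete[OF ON, of v] by simp
    also have "\<dots> = (\<Sum>i<CARD('n). (l i * cinner (f i) v) *s f i)"
      by (simp add: mv_sum mv_scale ev mult.commute)
    finally show ?thesis by (simp add: spec_mat_mv)
  qed
  thus ?thesis by (simp add: matrix_eq)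
qed

lemma pd_plus_inj:
  assumes "pos_def C" "s \<ge> 0" "C *v y + complex_of_real s *s y = 0"
  shows "y = 0"
proof (rule ccontr)
  assume "y \<noteq> 0"
  hence "Re (cinner y (C *v y)) > 0" using assms(1) by (simp add: pos_def_def)
  moreover have "Re (cinner y (complex_of_real s *s y)) \<ge> 0"
    using assms(2) by (simp add: cinner_scale_right cinner_self)
  moreover have "cinner y (C *v y) + cinner y (complex_of_real s *s y) = 0"
    using assms(3) by (metis cinner_add_right cinner_zero_right)
  ultimately show False by (metis add_pos_nonneg less_irrefl plus_complex.sel(1) zero_complex.sel(1))
qed

lemma sqrt_exists_unique:
  fixes A :: "complex^'n^'n"
  assumes pd: "pos_def A"
  shows "\<exists>!B. pos_def B \<and> B ** B = A"
proof -
  let ?n = "CARD('n)"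
  have herm: "hermitian A" using pd by (simp add: pos_def_def)
  obtain f lam where ON: "orthonormal_on f ?n" and ev: "\<forall>i<?n. A *v f i = complex_of_real (lam i) *s f i"
    using spectral_ex[OF herm, of ?n] by auto
  have f1: "cinner (f i) (f i) = 1" if "i < ?n" for i using ON that by (simp add: orthonormal_on_def)
  have lampos: "lam i > 0" if i: "i < ?n" for i
  proof -
    have "f i \<noteq> 0" using f1[OF i] by auto
    hence "Re (cinner (f i) (A *v f i)) > 0" using pd by (simp add: pos_def_def)
    thus ?thesis using ev i f1[OF i] by (simp add: cinner_scale_right)
  qed
  define s where "s = (\<lambda>i. complex_of_real (sqrt (lam i)))"
  define B where "B = spec_mat f s ?n"
  have Bf: "B *v f i = s i *s f i" if "i < ?n" for i
  proof -
    have "B *v f i = (\<Sum>j<?n. (s j * cinner (f j) (f i)) *s f j)" by (simp add: B_def spec_mat_mv)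
    also have "\<dots> = (\<Sum>j<?n. (if j = i then s j *s f j else 0))"
      using ON that unfolding orthonormal_on_def by (intro sum.cong) auto
    also have "\<dots> = s i *s f i" using that by simp
    finally show ?thesis .
  qed
  have Aeq: "A = spec_mat f (\<lambda>i. complex_of_real (lam i)) ?n"
    by (rule mv_ON_expand[OF ON]) (simp add: ev)
  have BB: "B ** B = A"
  proof -
    have "(B ** B) *v f i = complex_of_real (lam i) *s f i" if "i < ?n" for i
      using that lampos[OF that]
      by (simp add: matrix_vector_mul_assoc[symmetric] Bf mv_scale s_def of_real_mult[symmetric])
    hence "B ** B = spec_mat f (\<lambda>i. complex_of_real (lam i)) ?n" by (intro mv_ON_expand[OF ON])
    thus ?thesis using Aeq by simp
  qed
  have Bpd: "pos_def B"
  proof -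
    have "hermitian B" unfolding hermitian_def B_def spec_mat_adjoint by (simp add: s_def)
    moreover have "Re (cinner v (B *v v)) > 0" if "v \<noteq> 0" for v
    proof -
      have "cinner v (B *v v) = (\<Sum>i<?n. s i * cinner (f i) v * cinner v (f i))"
        by (simp add: B_def spec_mat_mv cinner_sum_right cinner_scale_right mult_ac)
      also have "\<dots> = (\<Sum>i<?n. complex_of_real (sqrt (lam i) * (cmod (cinner (f i) v))\<^sup>2))"
        by (intro sum.cong refl)
           (simp add: s_def cnj_cinner[of "f _" v, symmetric] mult_cnj_self mult.assoc)
      finally have reeq: "Re (cinner v (B *v v)) = (\<Sum>i<?n. sqrt (lam i) * (cmod (cinner (f i) v))\<^sup>2)"
        by (simp add: Re_sum)
      have "\<exists>i<?n. cinner (f i) v \<noteq> 0"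
      proof (rule ccontr)
        assume "\<not> ?thesis"
        hence "v = 0" using ON_complete[OF ON, of v] by simp
        thus False using that by simp
      qed
      then obtain i where i: "i < ?n" "cinner (f i) v \<noteq> 0" by blast
      have "0 < sqrt (lam i) * (cmod (cinner (f i) v))\<^sup>2" using lampos[OF i(1)] i(2) by simp
      also have "\<dots> \<le> (\<Sum>i<?n. sqrt (lam i) * (cmod (cinner (f i) v))\<^sup>2)"
        using i(1) lampos by (intro member_le_sum) (auto intro!: mult_nonneg_nonneg simp: less_imp_le)
      finally show ?thesis using reeq by simp
    qed
    ultimately show ?thesis by (simp add: pos_def_def)
  qed
  have uniq: "C = B" if C: "pos_def C" "C ** C = A" for C
  proof -
    have Cf: "C *v f i = s i *s f i" if i: "i < ?n" for i
    proof -
      define y where "y = C *v f i - s i *s f i"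
      have ss: "s i * s i = complex_of_real (lam i)"
        using lampos[OF i] by (simp add: s_def of_real_mult[symmetric])
      have e1: "C *v y = (C ** C) *v f i - s i *s (C *v f i)"
        by (simp add: y_def mv_diff mv_scale matrix_vector_mul_assoc)
      have e2: "s i *s y = s i *s (C *v f i) - (s i * s i) *s f i"
        by (simp add: y_def vector_ssub_ldistrib vector_smult_assoc)
      have "C *v y + s i *s y = (C ** C) *v f i - complex_of_real (lam i) *s f i"
        unfolding e1 e2 ss by simp
      also have "\<dots> = 0" using C(2) ev i by simp
      finally have "C *v y + complex_of_real (sqrt (lam i)) *s y = 0" by (simp add: s_def)
      hence "y = 0" by (rule pd_plus_inj[OF C(1), rotated]) (use lampos[OF i] in simp)
      thus ?thesis by (simp add: y_def)
    qed
    hence "C = spec_mat f s ?n" by (intro mv_ON_expand[OF ON])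
    thus ?thesis by (simp add: B_def)
  qed
  show ?thesis using Bpd BB uniq by blast
qed

lemma sqrt_mat_props:
  assumes "pos_def A"
  shows "pos_def (sqrt_mat A)" "sqrt_mat A ** sqrt_mat A = A"
  using theI'[OF sqrt_exists_unique[OF assms]] unfolding sqrt_mat_def by auto

lemma inv_sqrt_sq:
  assumes "pos_def A"
  shows "inv_sqrt_mat A ** inv_sqrt_mat A = matrix_inv A"
proof -
  let ?B = "sqrt_mat A"
  have inv: "invertible ?B" using pos_def_invertible sqrt_mat_props(1)[OF assms] by blast
  have "A ** (inv_sqrt_mat A ** inv_sqrt_mat A) = (?B ** ?B) ** (matrix_inv ?B ** matrix_inv ?B)"
    by (simp only: sqrt_mat_props(2)[OF assms] inv_sqrt_mat_def)
  also have "\<dots> = ?B ** (?B ** matrix_inv ?B) ** matrix_inv ?B"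
    by (simp only: matrix_mul_assoc)
  also have "\<dots> = mat 1" by (simp add: matrix_inv_props[OF inv])
  finally show ?thesis using matrix_inv_unique by metis
qed


lemma integrable_return_any:
  fixes g :: "real \<Rightarrow> real"
  assumes "g \<in> borel_measurable borel"
  shows "integrable (return borel m) g"
  unfolding integrable_iff_bounded using assms by (simp add: nn_integral_return)

lemma rn_facts:
  fixes m v :: real and k :: nat
  assumes v: "v \<ge> 0"
  shows "integrable (real_normal m v) (\<lambda>x. (x - m) ^ k)"
    "integral\<^sup>L (real_normal m v) (\<lambda>x. x - m) = 0"
    "integral\<^sup>L (real_normal m v) (\<lambda>x. (x - m)^2) = v"
    "integral\<^sup>L (real_normal m v) (\<lambda>x. (x - m)^4) = 3 * v\<^sup>2"
proof -
  have "integrable (real_normal m v) (\<lambda>x. (x - m) ^ k) \<and>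
    integral\<^sup>L (real_normal m v) (\<lambda>x. x - m) = 0 \<and>
    integral\<^sup>L (real_normal m v) (\<lambda>x. (x - m)^2) = v \<and>
    integral\<^sup>L (real_normal m v) (\<lambda>x. (x - m)^4) = 3 * v\<^sup>2"
  proof (cases "v = 0")
    case True
    thus ?thesis by (simp add: real_normal_def integrable_return_any integral_return measure_return)
  next
    case False
    hence vp: "v > 0" using v by simp
    define s where "s = sqrt v"
    have s: "s > 0" using vp by (simp add: s_def)
    have dens: "real_normal m v = density lborel (normal_density m s)"
      using False by (simp add: real_normal_def s_def)
    have int: "integrable (real_normal m v) (\<lambda>x. (x - m) ^ j)" for j
      unfolding dens by (subst integrable_density) (auto intro: integrable_normal_moment[OF s])
    have I: "integral\<^sup>L (real_normal m v) (\<lambda>x. (x - m) ^ j) = (\<integral>x. normal_density m s x * (x - m)^j \<partial>lborel)" for j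
      unfolding dens by (subst integral_density) auto
    have e1: "integral\<^sup>L (real_normal m v) (\<lambda>x. x - m) = 0"
      using I[of 1] integral_normal_moment_odd[OF s, of m 0] by simp
    have e2: "integral\<^sup>L (real_normal m v) (\<lambda>x. (x - m)^2) = v"
      using I[of 2] integral_normal_moment_even[OF s, of m 1] s vp
      by (simp add: s_def)
    have e4: "integral\<^sup>L (real_normal m v) (\<lambda>x. (x - m)^4) = 3 * v\<^sup>2"
    proof -
      have "integral\<^sup>L (real_normal m v) (\<lambda>x. (x - m)^4) = fact (2 * 2) / ((2 / s\<^sup>2)^2 * fact 2)"
        using I[of 4] integral_normal_moment_even[OF s, of m 2] by simp
      also have "\<dots> = 3 * v\<^sup>2" using s vp
        by (simp add: s_def fact_numeral power2_eq_square field_simps)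
      finally show ?thesis .
    qed
    show ?thesis using int e1 e2 e4 by blast
  qed
  thus "integrable (real_normal m v) (\<lambda>x. (x - m) ^ k)"
    "integral\<^sup>L (real_normal m v) (\<lambda>x. x - m) = 0"
    "integral\<^sup>L (real_normal m v) (\<lambda>x. (x - m)^2) = v"
    "integral\<^sup>L (real_normal m v) (\<lambda>x. (x - m)^4) = 3 * v\<^sup>2" by auto
qed

lemma rv_normal_facts:
  fixes Y :: "'w \<Rightarrow> real"
  assumes Y: "Y \<in> borel_measurable M" and d: "distr M borel Y = real_normal m v" and v: "v \<ge> 0"
  shows "integrable M (\<lambda>w. (Y w - m) ^ k)"
    "integral\<^sup>L M (\<lambda>w. Y w - m) = 0"
    "integral\<^sup>L M (\<lambda>w. (Y w - m)^2) = v"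
    "integral\<^sup>L M (\<lambda>w. (Y w - m)^4) = 3 * v\<^sup>2"
proof -
  have tr: "integral\<^sup>L M (\<lambda>w. g (Y w)) = integral\<^sup>L (real_normal m v) g" if "g \<in> borel_measurable borel" for g :: "real \<Rightarrow> real"
    using integral_distr[OF Y that] d by simp
  show "integrable M (\<lambda>w. (Y w - m) ^ k)"
    using rn_facts(1)[OF v, of m k] integrable_distr_eq[OF Y, of "\<lambda>x. (x - m)^k"] d by simp
  show "integral\<^sup>L M (\<lambda>w. Y w - m) = 0" using tr[of "\<lambda>x. x - m"] rn_facts(2)[OF v] by simp
  show "integral\<^sup>L M (\<lambda>w. (Y w - m)^2) = v" using tr[of "\<lambda>x. (x - m)^2"] rn_facts(3)[OF v] by simp
  show "integral\<^sup>L M (\<lambda>w. (Y w - m)^4) = 3 * v\<^sup>2" using tr[of "\<lambda>x. (x - m)^4"] rn_facts(4)[OF v] by simp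
qed


lemma isserlis_poly:
  fixes y1 y2 y3 y4 :: real
  defines "W \<equiv> \<lambda>e2 e3 e4. y1 + e2 * y2 + e3 * y3 + e4 * y4"
  shows "y1 * y2 * y3 * y4 = (W 1 1 1 ^ 4 - W 1 1 (-1) ^ 4 - W 1 (-1) 1 ^ 4 + W 1 (-1) (-1) ^ 4
     - W (-1) 1 1 ^ 4 + W (-1) 1 (-1) ^ 4 + W (-1) (-1) 1 ^ 4 - W (-1) (-1) (-1) ^ 4) / 192"
  unfolding W_def by (simp add: field_simps) algebra

lemma isserlis_alg:
  fixes b11 b12 b13 b14 b22 b23 b24 b33 b34 b44 :: real
  defines "Q \<equiv> \<lambda>e2 e3 e4. b11 + b22 + b33 + b44 + 2*e2*b12 + 2*e3*b13 + 2*e4*b14 + 2*e2*e3*b23 + 2*e2*e4*b24 + 2*e3*e4*b34"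
  shows "(3 * (Q 1 1 1)\<^sup>2 - 3 * (Q 1 1 (-1))\<^sup>2 - 3 * (Q 1 (-1) 1)\<^sup>2 + 3 * (Q 1 (-1) (-1))\<^sup>2
     - 3 * (Q (-1) 1 1)\<^sup>2 + 3 * (Q (-1) 1 (-1))\<^sup>2 + 3 * (Q (-1) (-1) 1)\<^sup>2 - 3 * (Q (-1) (-1) (-1))\<^sup>2) / 192
     = b12 * b34 + b13 * b24 + b14 * b23"
  unfolding Q_def by (simp add: field_simps) algebra

lemma sq_expand:
  fixes y1 y2 y3 y4 e2 e3 e4 :: real
  assumes "e2*e2 = 1" "e3*e3 = 1" "e4*e4 = 1"
  shows "(y1 + e2*y2 + e3*y3 + e4*y4)^2 = y1*y1 + y2*y2 + y3*y3 + y4*y4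
      + 2*e2*(y1 * y2) + 2*e3*(y1 * y3) + 2*e4*(y1 * y4) + 2*e2*e3*(y2 * y3)
      + 2*e2*e4*(y2 * y4) + 2*e3*e4*(y3 * y4)"
  using assms by algebra

lemma real_isserlis:
  fixes Y1 Y2 Y3 Y4 :: "'w \<Rightarrow> real"
  assumes m: "Y1 \<in> borel_measurable M" "Y2 \<in> borel_measurable M" "Y3 \<in> borel_measurable M" "Y4 \<in> borel_measurable M"
  and sq: "integrable M (\<lambda>w. (Y1 w)\<^sup>2)" "integrable M (\<lambda>w. (Y2 w)\<^sup>2)"
          "integrable M (\<lambda>w. (Y3 w)\<^sup>2)" "integrable M (\<lambda>w. (Y4 w)\<^sup>2)"
  and G: "\<And>e2 e3 e4. e2 \<in> {-1,1} \<Longrightarrow> e3 \<in> {-1,1} \<Longrightarrow> e4 \<in> {-1,1} \<Longrightarrow>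
     integrable M (\<lambda>w. (Y1 w + e2 * Y2 w + e3 * Y3 w + e4 * Y4 w)^4) \<and>
     (\<integral>w. (Y1 w + e2 * Y2 w + e3 * Y3 w + e4 * Y4 w)^4 \<partial>M) =
       3 * (\<integral>w. (Y1 w + e2 * Y2 w + e3 * Y3 w + e4 * Y4 w)^2 \<partial>M)\<^sup>2"
  shows "integrable M (\<lambda>w. Y1 w * Y2 w * Y3 w * Y4 w)"
    "(\<integral>w. Y1 w * Y2 w * Y3 w * Y4 w \<partial>M) =
       (\<integral>w. Y1 w * Y2 w \<partial>M) * (\<integral>w. Y3 w * Y4 w \<partial>M)
     + (\<integral>w. Y1 w * Y3 w \<partial>M) * (\<integral>w. Y2 w * Y4 w \<partial>M)
     + (\<integral>w. Y1 w * Y4 w \<partial>M) * (\<integral>w. Y2 w * Y3 w \<partial>M)"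
proof -
  have prodint: "integrable M (\<lambda>w. Y w * Z w)"
    if "Y \<in> borel_measurable M" "Z \<in> borel_measurable M"
       "integrable M (\<lambda>w. (Y w)\<^sup>2)" "integrable M (\<lambda>w. (Z w)\<^sup>2)" for Y Z :: "'w \<Rightarrow> real"
  proof (rule Bochner_Integration.integrable_bound[of _ "\<lambda>w. (Y w)\<^sup>2 + (Z w)\<^sup>2"])
    show "integrable M (\<lambda>w. (Y w)\<^sup>2 + (Z w)\<^sup>2)" using that by simp
    show "(\<lambda>w. Y w * Z w) \<in> borel_measurable M" using that by simp
    show "AE w in M. norm (Y w * Z w) \<le> norm ((Y w)\<^sup>2 + (Z w)\<^sup>2)"
    proof (rule AE_I2)
      fix w
      have "\<bar>Y w * Z w\<bar> \<le> (Y w)\<^sup>2 + (Z w)\<^sup>2"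
      proof -
        have "2 * \<bar>Y w\<bar> * \<bar>Z w\<bar> \<le> \<bar>Y w\<bar>\<^sup>2 + \<bar>Z w\<bar>\<^sup>2" by (rule sum_squares_bound)
        moreover have "0 \<le> \<bar>Y w\<bar> * \<bar>Z w\<bar>" by simp
        ultimately show ?thesis unfolding abs_mult power2_abs by linarith
      qed
      thus "norm (Y w * Z w) \<le> norm ((Y w)\<^sup>2 + (Z w)\<^sup>2)" by simp
    qed
  qed
  have sq': "integrable M (\<lambda>w. Y1 w * Y1 w)" "integrable M (\<lambda>w. Y2 w * Y2 w)"
    "integrable M (\<lambda>w. Y3 w * Y3 w)" "integrable M (\<lambda>w. Y4 w * Y4 w)"
    using sq by (simp_all add: power2_eq_square)
  note i12 = prodint[OF m(1,2) sq(1,2)] and i13 = prodint[OF m(1,3) sq(1,3)]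
   and i14 = prodint[OF m(1,4) sq(1,4)] and i23 = prodint[OF m(2,3) sq(2,3)]
   and i24 = prodint[OF m(2,4) sq(2,4)] and i34 = prodint[OF m(3,4) sq(3,4)]
  define B where "B = (\<lambda>Y Z :: 'w \<Rightarrow> real. \<integral>w. Y w * Z w \<partial>M)"
  define W where "W = (\<lambda>e2 e3 e4 w. Y1 w + e2 * Y2 w + e3 * Y3 w + e4 * Y4 w)"
  have Wsq: "(\<integral>w. (W e2 e3 e4 w)^2 \<partial>M) = B Y1 Y1 + B Y2 Y2 + B Y3 Y3 + B Y4 Y4
      + 2*e2*B Y1 Y2 + 2*e3*B Y1 Y3 + 2*e4*B Y1 Y4 + 2*e2*e3*B Y2 Y3 + 2*e2*e4*B Y2 Y4 + 2*e3*e4*B Y3 Y4"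
    if "e2 \<in> {-1,1}" "e3 \<in> {-1,1}" "e4 \<in> {-1,1}" for e2 e3 e4 :: real
  proof -
    have sqe: "e2*e2 = 1" "e3*e3 = 1" "e4*e4 = 1" using that by auto
    have eq: "(\<lambda>w. (W e2 e3 e4 w)^2) = (\<lambda>w. Y1 w * Y1 w + Y2 w * Y2 w + Y3 w * Y3 w + Y4 w * Y4 w
      + 2*e2*(Y1 w * Y2 w) + 2*e3*(Y1 w * Y3 w) + 2*e4*(Y1 w * Y4 w) + 2*e2*e3*(Y2 w * Y3 w)
      + 2*e2*e4*(Y2 w * Y4 w) + 2*e3*e4*(Y3 w * Y4 w))"
      unfolding W_def by (rule ext) (rule sq_expand[OF sqe])
    have hb: "has_bochner_integral M (\<lambda>w. Y1 w * Y1 w + Y2 w * Y2 w + Y3 w * Y3 w + Y4 w * Y4 w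
      + 2*e2*(Y1 w * Y2 w) + 2*e3*(Y1 w * Y3 w) + 2*e4*(Y1 w * Y4 w) + 2*e2*e3*(Y2 w * Y3 w)
      + 2*e2*e4*(Y2 w * Y4 w) + 2*e3*e4*(Y3 w * Y4 w)) (B Y1 Y1 + B Y2 Y2 + B Y3 Y3 + B Y4 Y4
      + 2*e2*B Y1 Y2 + 2*e3*B Y1 Y3 + 2*e4*B Y1 Y4 + 2*e2*e3*B Y2 Y3 + 2*e2*e4*B Y2 Y4 + 2*e3*e4*B Y3 Y4)"
      unfolding B_def
      by (intro has_bochner_integral_add has_bochner_integral_mult_right has_bochner_integral_integrable
          sq' i12 i13 i14 i23 i24 i34)
    show ?thesis by (subst eq) (rule has_bochner_integral_integral_eq[OF hb])
  qed
  have G': "has_bochner_integral M (\<lambda>w. (W e2 e3 e4 w)^4) (3 * (B Y1 Y1 + B Y2 Y2 + B Y3 Y3 + B Y4 Y4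
      + 2*e2*B Y1 Y2 + 2*e3*B Y1 Y3 + 2*e4*B Y1 Y4 + 2*e2*e3*B Y2 Y3 + 2*e2*e4*B Y2 Y4 + 2*e3*e4*B Y3 Y4)\<^sup>2)"
    if "e2 \<in> {-1,1}" "e3 \<in> {-1,1}" "e4 \<in> {-1,1}" for e2 e3 e4 :: real
    using G[OF that] Wsq[OF that, unfolded W_def] unfolding W_def has_bochner_integral_iff by simp
  have poly: "(\<lambda>w. Y1 w * Y2 w * Y3 w * Y4 w) = (\<lambda>w. (W 1 1 1 w ^ 4 - W 1 1 (-1) w ^ 4 - W 1 (-1) 1 w ^ 4 + W 1 (-1) (-1) w ^ 4
     - W (-1) 1 1 w ^ 4 + W (-1) 1 (-1) w ^ 4 + W (-1) (-1) 1 w ^ 4 - W (-1) (-1) (-1) w ^ 4) / 192)"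
    unfolding W_def by (rule ext) (rule isserlis_poly)
  let ?Q = "\<lambda>e2 e3 e4. B Y1 Y1 + B Y2 Y2 + B Y3 Y3 + B Y4 Y4
      + 2*e2*B Y1 Y2 + 2*e3*B Y1 Y3 + 2*e4*B Y1 Y4 + 2*e2*e3*B Y2 Y3 + 2*e2*e4*B Y2 Y4 + 2*e3*e4*B Y3 Y4"
  have hb: "has_bochner_integral M (\<lambda>w. Y1 w * Y2 w * Y3 w * Y4 w)
     ((3 * (?Q 1 1 1)\<^sup>2 - 3 * (?Q 1 1 (-1))\<^sup>2 - 3 * (?Q 1 (-1) 1)\<^sup>2 + 3 * (?Q 1 (-1) (-1))\<^sup>2
     - 3 * (?Q (-1) 1 1)\<^sup>2 + 3 * (?Q (-1) 1 (-1))\<^sup>2 + 3 * (?Q (-1) (-1) 1)\<^sup>2 - 3 * (?Q (-1) (-1) (-1))\<^sup>2) / 192)"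
    unfolding poly
    by (intro has_bochner_integral_divide_zero has_bochner_integral_add has_bochner_integral_diff G') auto
  show "integrable M (\<lambda>w. Y1 w * Y2 w * Y3 w * Y4 w)" using hb by (rule integrable.intros)
  have "(\<integral>w. Y1 w * Y2 w * Y3 w * Y4 w \<partial>M) = B Y1 Y2 * B Y3 Y4 + B Y1 Y3 * B Y2 Y4 + B Y1 Y4 * B Y2 Y3"
    unfolding has_bochner_integral_integral_eq[OF hb] by (rule isserlis_alg)
  thus "(\<integral>w. Y1 w * Y2 w * Y3 w * Y4 w \<partial>M) =
       (\<integral>w. Y1 w * Y2 w \<partial>M) * (\<integral>w. Y3 w * Y4 w \<partial>M)
     + (\<integral>w. Y1 w * Y3 w \<partial>M) * (\<integral>w. Y2 w * Y4 w \<partial>M)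
     + (\<integral>w. Y1 w * Y4 w \<partial>M) * (\<integral>w. Y2 w * Y3 w \<partial>M)" by (simp add: B_def)
qed


lemma meas_vec_nth[measurable]:
  fixes f :: "'w \<Rightarrow> complex^'n"
  shows "f \<in> borel_measurable M \<Longrightarrow> (\<lambda>w. f w $ k) \<in> borel_measurable M"
  by (rule measurable_compose[OF _ borel_measurable_continuous_onI[OF continuous_on_component[OF continuous_on_id]]])

lemma meas_cinner[measurable]:
  fixes f g :: "'w \<Rightarrow> complex^'n"
  shows "f \<in> borel_measurable M \<Longrightarrow> g \<in> borel_measurable M \<Longrightarrow> (\<lambda>w. cinner (f w) (g w)) \<in> borel_measurable M"
proof -
  assume a: "f \<in> borel_measurable M" "g \<in> borel_measurable M"
  have cp: "continuous_on UNIV (\<lambda>p::(complex^'n) \<times> (complex^'n). cinner (fst p) (snd p))"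
    unfolding cinner_def
    by (intro continuous_on_sum continuous_on_mult continuous_on_cnj continuous_on_fst continuous_on_snd continuous_on_component continuous_on_id)
  have "(\<lambda>w. (f w, g w)) \<in> borel_measurable M" using a by measurable
  from measurable_compose[OF this borel_measurable_continuous_onI[OF cp]] show ?thesis by simp
qed

lemma cont_mv: "continuous_on UNIV (\<lambda>v::complex^'n. (A::complex^'n^'m) *v v)"
  unfolding matrix_vector_mult_def
  by (intro continuous_on_vec_lambda continuous_on_sum continuous_on_mult continuous_on_const continuous_on_component continuous_on_id)

lemma meas_mv[measurable]:
  fixes f :: "'w \<Rightarrow> complex^'n" and A :: "complex^'n^'m"
  shows "f \<in> borel_measurable M \<Longrightarrow> (\<lambda>w. A *v f w) \<in> borel_measurable M"
  by (rule measurable_compose[OF _ borel_measurable_continuous_onI[OF cont_mv]])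

lemma meas_smult[measurable]:
  fixes f :: "'w \<Rightarrow> complex^'n" and c :: "'w \<Rightarrow> complex"
  assumes "f \<in> borel_measurable M" "c \<in> borel_measurable M"
  shows "(\<lambda>w. c w *s f w) \<in> borel_measurable M"
proof -
  have "(\<lambda>w. c w *s f w) = (\<lambda>w. \<chi> k. c w * f w $ k)" by (rule ext) (simp add: vec_eq_iff)
  moreover have "(\<lambda>w. \<chi> k. c w * f w $ k) \<in> borel_measurable M"
  proof -
    have cp: "continuous_on UNIV (\<lambda>p::complex \<times> (complex^'n). \<chi> k. fst p * snd p $ k)"
      by (intro continuous_on_vec_lambda continuous_on_mult continuous_on_fst continuous_on_snd continuous_on_component continuous_on_id)
    have "(\<lambda>w. (c w, f w)) \<in> borel_measurable M" using assms by measurable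
    from measurable_compose[OF this borel_measurable_continuous_onI[OF cp]] show ?thesis by simp
  qed
  ultimately show ?thesis by simp
qed

lemma meas_vadd[measurable]:
  fixes f g :: "'w \<Rightarrow> complex^'n"
  assumes "f \<in> borel_measurable M" "g \<in> borel_measurable M"
  shows "(\<lambda>w. f w + g w) \<in> borel_measurable M"
  using assms by (rule borel_measurable_add)

lemma mv_add_c: "(A::complex^'n^'m) *v (u + v) = A *v u + A *v v"
  by (simp add: matrix_vector_right_distrib)
lemma mv_diff_c: "(A::complex^'n^'m) *v (u - v) = A *v u - A *v v"
  by (simp add: vec_eq_iff matrix_vector_mult_def sum_subtractf right_diff_distrib)
lemma mv_scale_c: "(A::complex^'n^'m) *v (c *s v) = c *s (A *v v)"
  by (simp add: vec_eq_iff matrix_vector_mult_def sum_distrib_left mult_ac)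

section \<open>Moments of a proper complex Gaussian vector\<close>

definition gY :: "('w \<Rightarrow> complex^'n) \<Rightarrow> complex^'n \<Rightarrow> 'w \<Rightarrow> real" where
  "gY Z a w = Re (cinner a (Z w))"

lemma gY_add: "gY Z (a + b) w = gY Z a w + gY Z b w"
  by (simp add: gY_def cinner_add_left)
lemma gY_scale_real: "gY Z (complex_of_real e *s a) w = e * gY Z a w"
  by (simp add: gY_def cinner_scale_left)
lemma gY_i: "gY Z (\<i> *s a) w = Im (cinner a (Z w))"
  by (simp add: gY_def cinner_scale_left)

locale cgauss =
  fixes M :: "'w measure" and Z :: "'w \<Rightarrow> complex^'n" and S :: "complex^'n^'n"
  assumes CN: "is_CN M Z 0 S" and herm: "hermitian S" and psd: "\<And>a. Re (cinner a (S *v a)) \<ge> 0"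
begin

lemma Zmeas[measurable]: "Z \<in> borel_measurable M"
  using CN by (simp add: is_CN_def)

lemma gY_meas[measurable]: "gY Z a \<in> borel_measurable M"
  unfolding gY_def by measurable

definition q :: "complex^'n \<Rightarrow> real" where "q a = Re (cinner a (S *v a)) / 2"

lemma q_nonneg: "q a \<ge> 0" using psd[of a] by (simp add: q_def)

lemma gY_distr: "distr M borel (gY Z a) = real_normal 0 (q a)"
  using CN unfolding is_CN_def gY_def q_def by simp

lemma gY_facts:
  "integrable M (\<lambda>w. (gY Z a w) ^ k)"
  "integral\<^sup>L M (gY Z a) = 0"
  "integral\<^sup>L M (\<lambda>w. (gY Z a w)^2) = q a"
  "integral\<^sup>L M (\<lambda>w. (gY Z a w)^4) = 3 * (q a)\<^sup>2"
  using rv_normal_facts[OF gY_meas gY_distr q_nonneg] by (simp_all add: fun_eq_iff)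

lemma gY_int1: "integrable M (gY Z a)"
  using gY_facts(1)[of a 1] by simp

lemma herm_swap: "cinner b (S *v a) = cnj (cinner a (S *v b))"
  by (simp add: cnj_cinner hermitian_cinner[OF herm])

lemma gY_prod_int: "integrable M (\<lambda>w. gY Z a w * gY Z b w)"
proof (rule Bochner_Integration.integrable_bound[of _ "\<lambda>w. (gY Z a w)\<^sup>2 + (gY Z b w)\<^sup>2"])
  show "integrable M (\<lambda>w. (gY Z a w)\<^sup>2 + (gY Z b w)\<^sup>2)" using gY_facts(1) by simp
  show "(\<lambda>w. gY Z a w * gY Z b w) \<in> borel_measurable M" by simp
  show "AE w in M. norm (gY Z a w * gY Z b w) \<le> norm ((gY Z a w)\<^sup>2 + (gY Z b w)\<^sup>2)"
  proof (rule AE_I2)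
    fix w
    have "2 * \<bar>gY Z a w\<bar> * \<bar>gY Z b w\<bar> \<le> \<bar>gY Z a w\<bar>\<^sup>2 + \<bar>gY Z b w\<bar>\<^sup>2" by (rule sum_squares_bound)
    moreover have "0 \<le> \<bar>gY Z a w\<bar> * \<bar>gY Z b w\<bar>" by simp
    ultimately have "\<bar>gY Z a w * gY Z b w\<bar> \<le> (gY Z a w)\<^sup>2 + (gY Z b w)\<^sup>2"
      unfolding abs_mult power2_abs by linarith
    thus "norm (gY Z a w * gY Z b w) \<le> norm ((gY Z a w)\<^sup>2 + (gY Z b w)\<^sup>2)" by simp
  qed
qed

lemma gY_cov: "(\<integral>w. gY Z a w * gY Z b w \<partial>M) = Re (cinner a (S *v b)) / 2"
proof -
  have pw: "gY Z a w * gY Z b w = ((gY Z (a + b) w)\<^sup>2 - (gY Z (a + complex_of_real (-1) *s b) w)\<^sup>2) / 4" for w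
    unfolding gY_add gY_scale_real by (simp add: power2_eq_square algebra_simps)
  have "(\<integral>w. gY Z a w * gY Z b w \<partial>M) = ((\<integral>w. (gY Z (a + b) w)\<^sup>2 \<partial>M) - (\<integral>w. (gY Z (a + complex_of_real (-1) *s b) w)\<^sup>2 \<partial>M)) / 4"
    unfolding pw using gY_facts(1) by simp
  also have "\<dots> = (q (a + b) - q (a + complex_of_real (-1) *s b)) / 4" by (simp add: gY_facts(3))
  also have "\<dots> = Re (cinner a (S *v b)) / 2"
  proof -
    have h: "Re (cinner b (S *v a)) = Re (cinner a (S *v b))" by (subst herm_swap) simp
    show ?thesis unfolding q_def
      by (simp add: cinner_add_left cinner_add_right mv_add_c cinner_scale_left cinner_scale_right mv_scale_c h
        cinner_diff_left cinner_diff_right mv_diff_c field_simps)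
  qed
  finally show ?thesis .
qed

end


lemma expand4:
  fixes a0 a1 b0 b1 c0 c1 d0 d1 :: real
  shows "cnj (complex_of_real a0 + \<i> * complex_of_real a1) * (complex_of_real b0 + \<i> * complex_of_real b1)
    * (complex_of_real c0 + \<i> * complex_of_real c1) * cnj (complex_of_real d0 + \<i> * complex_of_real d1) = 1 * complex_of_real (a0 * b0 * c0 * d0) + (- \<i>) * complex_of_real (a0 * b0 * c0 * d1) + \<i> * complex_of_real (a0 * b0 * c1 * d0) + \<i> * (- \<i>) * complex_of_real (a0 * b0 * c1 * d1) + \<i> * complex_of_real (a0 * b1 * c0 * d0) + \<i> * (- \<i>) * complex_of_real (a0 * b1 * c0 * d1) + \<i> * \<i> * complex_of_real (a0 * b1 * c1 * d0) + \<i> * \<i> * (- \<i>) * complex_of_real (a0 * b1 * c1 * d1) + (- \<i>) * complex_of_real (a1 * b0 * c0 * d0) + (- \<i>) * (- \<i>) * complex_of_real (a1 * b0 * c0 * d1) + (- \<i>) * \<i> * complex_of_real (a1 * b0 * c1 * d0) + (- \<i>) * \<i> * (- \<i>) * complex_of_real (a1 * b0 * c1 * d1) + (- \<i>) * \<i> * complex_of_real (a1 * b1 * c0 * d0) + (- \<i>) * \<i> * (- \<i>) * complex_of_real (a1 * b1 * c0 * d1) + (- \<i>) * \<i> * \<i> * complex_of_real (a1 * b1 * c1 * d0) + (- \<i>) * \<i> * \<i> * (- \<i>) * complex_of_real (a1 * b1 * c1 * d1)"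
  by (simp only: complex_cnj_add complex_cnj_mult complex_cnj_complex_of_real complex_cnj_i of_real_mult) algebra

lemma expand2:
  fixes a0 a1 b0 b1 :: real
  shows "(complex_of_real a0 + \<i> * complex_of_real a1) * cnj (complex_of_real b0 + \<i> * complex_of_real b1) =
    complex_of_real (a0 * b0) + complex_of_real (a1 * b1) + \<i> * complex_of_real (a1 * b0) - \<i> * complex_of_real (a0 * b1)"
  by (simp add: complex_eq_iff)

lemma expand2':
  fixes a0 a1 b0 b1 :: real
  shows "(complex_of_real a0 + \<i> * complex_of_real a1) * (complex_of_real b0 + \<i> * complex_of_real b1) =
    complex_of_real (a0 * b0) - complex_of_real (a1 * b1) + \<i> * complex_of_real (a1 * b0) + \<i> * complex_of_real (a0 * b1)"
  by (simp add: complex_eq_iff)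

context cgauss
begin

definition bb :: "complex^'n \<Rightarrow> complex^'n \<Rightarrow> real" where "bb x y = Re (cinner x (S *v y)) / 2"

lemma gauss4:
  "integrable M (\<lambda>w. gY Z a w * gY Z b w * gY Z c w * gY Z d w)"
  "(\<integral>w. gY Z a w * gY Z b w * gY Z c w * gY Z d w \<partial>M) = bb a b * bb c d + bb a c * bb b d + bb a d * bb b c"
proof -
  have G: "integrable M (\<lambda>w. (gY Z a w + e2 * gY Z b w + e3 * gY Z c w + e4 * gY Z d w)^4) \<and>
     (\<integral>w. (gY Z a w + e2 * gY Z b w + e3 * gY Z c w + e4 * gY Z d w)^4 \<partial>M) =
       3 * (\<integral>w. (gY Z a w + e2 * gY Z b w + e3 * gY Z c w + e4 * gY Z d w)^2 \<partial>M)\<^sup>2" for e2 e3 e4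
  proof -
    define v where "v = a + complex_of_real e2 *s b + complex_of_real e3 *s c + complex_of_real e4 *s d"
    have pw: "gY Z a w + e2 * gY Z b w + e3 * gY Z c w + e4 * gY Z d w = gY Z v w" for w
      by (simp add: v_def gY_add gY_scale_real)
    show ?thesis unfolding pw using gY_facts[of v] by simp
  qed
  show "integrable M (\<lambda>w. gY Z a w * gY Z b w * gY Z c w * gY Z d w)"
    by (rule real_isserlis(1)[OF gY_meas gY_meas gY_meas gY_meas gY_facts(1) gY_facts(1) gY_facts(1) gY_facts(1) G])
  show "(\<integral>w. gY Z a w * gY Z b w * gY Z c w * gY Z d w \<partial>M) = bb a b * bb c d + bb a c * bb b d + bb a d * bb b c"
    unfolding real_isserlis(2)[OF gY_meas gY_meas gY_meas gY_meas gY_facts(1) gY_facts(1) gY_facts(1) gY_facts(1) G]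
    by (simp add: gY_cov bb_def)
qed

lemma gauss4_hb: "has_bochner_integral M (\<lambda>w. gY Z a w * gY Z b w * gY Z c w * gY Z d w)
   (bb a b * bb c d + bb a c * bb b d + bb a d * bb b c)"
  using gauss4[of a b c d] by (simp add: has_bochner_integral_iff)

lemma L_decomp: "cinner a (Z w) = complex_of_real (gY Z a w) + \<i> * complex_of_real (gY Z (\<i> *s a) w)"
  by (simp add: gY_def cinner_scale_left complex_eq_iff)

lemma Lc_decomp: "cnj (cinner a (Z w)) = complex_of_real (gY Z a w) - \<i> * complex_of_real (gY Z (\<i> *s a) w)"
  by (simp add: gY_def cinner_scale_left complex_eq_iff)

lemma gauss_c4_hb:
  "has_bochner_integral M (\<lambda>w. cnj (cinner a (Z w)) * cinner b (Z w) * cinner c (Z w) * cnj (cinner d (Z w)))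
     (cinner b (S *v a) * cinner c (S *v d) + cinner c (S *v a) * cinner b (S *v d))"
proof -
  have pw: "(\<lambda>w. cnj (cinner a (Z w)) * cinner b (Z w) * cinner c (Z w) * cnj (cinner d (Z w))) = (\<lambda>w. 1 * complex_of_real (gY Z a w * gY Z b w * gY Z c w * gY Z d w) + (- \<i>) * complex_of_real (gY Z a w * gY Z b w * gY Z c w * gY Z (\<i> *s d) w) + \<i> * complex_of_real (gY Z a w * gY Z b w * gY Z (\<i> *s c) w * gY Z d w) + \<i> * (- \<i>) * complex_of_real (gY Z a w * gY Z b w * gY Z (\<i> *s c) w * gY Z (\<i> *s d) w) + \<i> * complex_of_real (gY Z a w * gY Z (\<i> *s b) w * gY Z c w * gY Z d w) + \<i> * (- \<i>) * complex_of_real (gY Z a w * gY Z (\<i> *s b) w * gY Z c w * gY Z (\<i> *s d) w) + \<i> * \<i> * complex_of_real (gY Z a w * gY Z (\<i> *s b) w * gY Z (\<i> *s c) w * gY Z d w) + \<i> * \<i> * (- \<i>) * complex_of_real (gY Z a w * gY Z (\<i> *s b) w * gY Z (\<i> *s c) w * gY Z (\<i> *s d) w) + (- \<i>) * complex_of_real (gY Z (\<i> *s a) w * gY Z b w * gY Z c w * gY Z d w) + (- \<i>) * (- \<i>) * complex_of_real (gY Z (\<i> *s a) w * gY Z b w * gY Z c w * gY Z (\<i> *s d) w) + (- \<i>) * \<i> * complex_of_real (gY Z (\<i> *s a) w * gY Z b w * gY Z (\<i> *s c) w * gY Z d w) + (- \<i>) * \<i> * (- \<i>) * complex_of_real (gY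 Z (\<i> *s a) w * gY Z b w * gY Z (\<i> *s c) w * gY Z (\<i> *s d) w) + (- \<i>) * \<i> * complex_of_real (gY Z (\<i> *s a) w * gY Z (\<i> *s b) w * gY Z c w * gY Z d w) + (- \<i>) * \<i> * (- \<i>) * complex_of_real (gY Z (\<i> *s a) w * gY Z (\<i> *s b) w * gY Z c w * gY Z (\<i> *s d) w) + (- \<i>) * \<i> * \<i> * complex_of_real (gY Z (\<i> *s a) w * gY Z (\<i> *s b) w * gY Z (\<i> *s c) w * gY Z d w) + (- \<i>) * \<i> * \<i> * (- \<i>) * complex_of_real (gY Z (\<i> *s a) w * gY Z (\<i> *s b) w * gY Z (\<i> *s c) w * gY Z (\<i> *s d) w))"
    by (rule ext) (simp only: L_decomp expand4)
  have hb: "has_bochner_integral M (\<lambda>w. 1 * complex_of_real (gY Z a w * gY Z b w * gY Z c w * gY Z d w) + (- \<i>) * complex_of_real (gY Z a w * gY Z b w * gY Z c w * gY Z (\<i> *s d) w) + \<i> * complex_of_real (gY Z a w * gY Z b w * gY Z (\<i> *s c) w * gY Z d w) + \<i> * (- \<i>) * complex_of_real (gY Z a w * gY Z b w * gY Z (\<i> *s c) w * gY Z (\<i> *s d) w) + \<i> * complex_of_real (gY Z a w * gY Z (\<i> *s b) w * gY Z c w * gY Z d w) + \<i> * (- \<i>) * complex_of_real (gY Z a w * gY Z (\<i> *s b) w * gY Z c w * gY Z (\<i> *s d) w) + \<i> * \<i> * complex_of_real (gY Z a w * gY Z (\<i> *s b) w * gY Z (\<i> *s c) w * gY Z d w) +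 \<i> * \<i> * (- \<i>) * complex_of_real (gY Z a w * gY Z (\<i> *s b) w * gY Z (\<i> *s c) w * gY Z (\<i> *s d) w) + (- \<i>) * complex_of_real (gY Z (\<i> *s a) w * gY Z b w * gY Z c w * gY Z d w) + (- \<i>) * (- \<i>) * complex_of_real (gY Z (\<i> *s a) w * gY Z b w * gY Z c w * gY Z (\<i> *s d) w) + (- \<i>) * \<i> * complex_of_real (gY Z (\<i> *s a) w * gY Z b w * gY Z (\<i> *s c) w * gY Z d w) + (- \<i>) * \<i> * (- \<i>) * complex_of_real (gY Z (\<i> *s a) w * gY Z b w * gY Z (\<i> *s c) w * gY Z (\<i> *s d) w) + (- \<i>) * \<i> * complex_of_real (gY Z (\<i> *s a) w * gY Z (\<i> *s b) w * gY Z c w * gY Z d w) + (- \<i>) * \<i> * (- \<i>) * complex_of_real (gY Z (\<i> *s a) w * gY Z (\<i> *s b) w * gY Z c w * gY Z (\<i> *s d) w) + (- \<i>) * \<i> * \<i> * complex_of_real (gY Z (\<i> *s a) w * gY Z (\<i> *s b) w * gY Z (\<i> *s c) w * gY Z d w) + (- \<i>) * \<i> * \<i> * (- \<i>) * complex_of_real (gY Z (\<i> *s a) w * gY Z (\<i> *s b) w * gY Z (\<i> *s c) w * gY Z (\<i> *s d) w)) (1 * complex_of_real (bb a b * bb c d + bb a c * bb b d + bb a d * bb b c) + (- \<i>) * complex_of_real (bb a b * bb c (\<i> *s d) + bb a c * bb b (\<i> *s d) + bb a (\<i> *s d) * bb b c) + \<i> * complex_of_real (bb a b * bb (\<i> *s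 c) d + bb a (\<i> *s c) * bb b d + bb a d * bb b (\<i> *s c)) + \<i> * (- \<i>) * complex_of_real (bb a b * bb (\<i> *s c) (\<i> *s d) + bb a (\<i> *s c) * bb b (\<i> *s d) + bb a (\<i> *s d) * bb b (\<i> *s c)) + \<i> * complex_of_real (bb a (\<i> *s b) * bb c d + bb a c * bb (\<i> *s b) d + bb a d * bb (\<i> *s b) c) + \<i> * (- \<i>) * complex_of_real (bb a (\<i> *s b) * bb c (\<i> *s d) + bb a c * bb (\<i> *s b) (\<i> *s d) + bb a (\<i> *s d) * bb (\<i> *s b) c) + \<i> * \<i> * complex_of_real (bb a (\<i> *s b) * bb (\<i> *s c) d + bb a (\<i> *s c) * bb (\<i> *s b) d + bb a d * bb (\<i> *s b) (\<i> *s c)) + \<i> * \<i> * (- \<i>) * complex_of_real (bb a (\<i> *s b) * bb (\<i> *s c) (\<i> *s d) + bb a (\<i> *s c) * bb (\<i> *s b) (\<i> *s d) + bb a (\<i> *s d) * bb (\<i> *s b) (\<i> *s c)) + (- \<i>) * complex_of_real (bb (\<i> *s a) b * bb c d + bb (\<i> *s a) c * bb b d + bb (\<i> *s a) d * bb b c) + (- \<i>) * (- \<i>) * complex_of_real (bb (\<i> *s a) b * bb c (\<i> *s d) + bb (\<i> *s a) c * bb b (\<i> *s d) + bb (\<i> *s a) (\<i> *s d) * bb b c) + (- \<i>) * \<i> * complex_of_real (bb (\<i> *s a) b * bb (\<i> *s c) d + bb (\<i> *s a) (\<i> *s c) * bb b d + bb (\<i> *s a) d * bb b (\<i> *s c))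 + (- \<i>) * \<i> * (- \<i>) * complex_of_real (bb (\<i> *s a) b * bb (\<i> *s c) (\<i> *s d) + bb (\<i> *s a) (\<i> *s c) * bb b (\<i> *s d) + bb (\<i> *s a) (\<i> *s d) * bb b (\<i> *s c)) + (- \<i>) * \<i> * complex_of_real (bb (\<i> *s a) (\<i> *s b) * bb c d + bb (\<i> *s a) c * bb (\<i> *s b) d + bb (\<i> *s a) d * bb (\<i> *s b) c) + (- \<i>) * \<i> * (- \<i>) * complex_of_real (bb (\<i> *s a) (\<i> *s b) * bb c (\<i> *s d) + bb (\<i> *s a) c * bb (\<i> *s b) (\<i> *s d) + bb (\<i> *s a) (\<i> *s d) * bb (\<i> *s b) c) + (- \<i>) * \<i> * \<i> * complex_of_real (bb (\<i> *s a) (\<i> *s b) * bb (\<i> *s c) d + bb (\<i> *s a) (\<i> *s c) * bb (\<i> *s b) d + bb (\<i> *s a) d * bb (\<i> *s b) (\<i> *s c)) + (- \<i>) * \<i> * \<i> * (- \<i>) * complex_of_real (bb (\<i> *s a) (\<i> *s b) * bb (\<i> *s c) (\<i> *s d) + bb (\<i> *s a) (\<i> *s c) * bb (\<i> *s b) (\<i> *s d) + bb (\<i> *s a) (\<i> *s d) * bb (\<i> *s b) (\<i> *s c)))"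
    by (intro has_bochner_integral_add has_bochner_integral_mult_right has_bochner_integral_of_real gauss4_hb)
  have "1 * complex_of_real (bb a b * bb c d + bb a c * bb b d + bb a d * bb b c) + (- \<i>) * complex_of_real (bb a b * bb c (\<i> *s d) + bb a c * bb b (\<i> *s d) + bb a (\<i> *s d) * bb b c) + \<i> * complex_of_real (bb a b * bb (\<i> *s c) d + bb a (\<i> *s c) * bb b d + bb a d * bb b (\<i> *s c)) + \<i> * (- \<i>) * complex_of_real (bb a b * bb (\<i> *s c) (\<i> *s d) + bb a (\<i> *s c) * bb b (\<i> *s d) + bb a (\<i> *s d) * bb b (\<i> *s c)) + \<i> * complex_of_real (bb a (\<i> *s b) * bb c d + bb a c * bb (\<i> *s b) d + bb a d * bb (\<i> *s b) c) + \<i> * (- \<i>) * complex_of_real (bb a (\<i> *s b) * bb c (\<i> *s d) + bb a c * bb (\<i> *s b) (\<i> *s d) + bb a (\<i> *s d) * bb (\<i> *s b) c) + \<i> * \<i> * complex_of_real (bb a (\<i> *s b) * bb (\<i> *s c) d + bb a (\<i> *s c) * bb (\<i> *s b) d + bb a d * bb (\<i> *s b) (\<i> *s c)) + \<i> * \<i> * (- \<i>) * complex_of_real (bb a (\<i> *s b) * bb (\<i> *s c) (\<i> *s d) + bb a (\<i> *s c) * bb (\<i> *s b) (\<i> *s d) + bb a (\<i> *s d) * bb (\<i> *s b) (\<i> *s c)) + (- \<i>) * complex_of_real (bb (\<i> *s a) b * bb c d + bb (\<i> *s a) c * bb b d + bb (\<i> *s a) d * bb b c) + (- \<i>) * (-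 \<i>) * complex_of_real (bb (\<i> *s a) b * bb c (\<i> *s d) + bb (\<i> *s a) c * bb b (\<i> *s d) + bb (\<i> *s a) (\<i> *s d) * bb b c) + (- \<i>) * \<i> * complex_of_real (bb (\<i> *s a) b * bb (\<i> *s c) d + bb (\<i> *s a) (\<i> *s c) * bb b d + bb (\<i> *s a) d * bb b (\<i> *s c)) + (- \<i>) * \<i> * (- \<i>) * complex_of_real (bb (\<i> *s a) b * bb (\<i> *s c) (\<i> *s d) + bb (\<i> *s a) (\<i> *s c) * bb b (\<i> *s d) + bb (\<i> *s a) (\<i> *s d) * bb b (\<i> *s c)) + (- \<i>) * \<i> * complex_of_real (bb (\<i> *s a) (\<i> *s b) * bb c d + bb (\<i> *s a) c * bb (\<i> *s b) d + bb (\<i> *s a) d * bb (\<i> *s b) c) + (- \<i>) * \<i> * (- \<i>) * complex_of_real (bb (\<i> *s a) (\<i> *s b) * bb c (\<i> *s d) + bb (\<i> *s a) c * bb (\<i> *s b) (\<i> *s d) + bb (\<i> *s a) (\<i> *s d) * bb (\<i> *s b) c) + (- \<i>) * \<i> * \<i> * complex_of_real (bb (\<i> *s a) (\<i> *s b) * bb (\<i> *s c) d + bb (\<i> *s a) (\<i> *s c) * bb (\<i> *s b) d + bb (\<i> *s a) d * bb (\<i> *s b) (\<i> *s c)) + (- \<i>) * \<i> * \<i> * (- \<i>) * complex_of_real (bb (\<i> *s a) (\<i> *s b) * bb (\<i> *s c) (\<i> *s d) + bb (\<i> *s a) (\<i> *s c) * bb (\<i> *s b) (\<i> *s d) + bb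 (\<i> *s a) (\<i> *s d) * bb (\<i> *s b) (\<i> *s c)) = cinner b (S *v a) * cinner c (S *v d) + cinner c (S *v a) * cinner b (S *v d)"
    unfolding bb_def
    by (simp add: mv_scale_c cinner_scale_left cinner_scale_right herm_swap[of b a] herm_swap[of c a]
        complex_eq_iff algebra_simps)
  thus ?thesis using hb pw by simp
qed

lemma gauss2_hb: "has_bochner_integral M (\<lambda>w. gY Z a w * gY Z b w) (bb a b)"
  using gY_prod_int[of a b] gY_cov[of a b] by (simp add: has_bochner_integral_iff bb_def)

lemma gauss_c2_hb:
  "has_bochner_integral M (\<lambda>w. cinner a (Z w) * cnj (cinner b (Z w))) (cinner a (S *v b))"
proof -
  have pw: "(\<lambda>w. cinner a (Z w) * cnj (cinner b (Z w))) = (\<lambda>w.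
    complex_of_real (gY Z a w * gY Z b w) + complex_of_real (gY Z (\<i> *s a) w * gY Z (\<i> *s b) w)
    + \<i> * complex_of_real (gY Z (\<i> *s a) w * gY Z b w) - \<i> * complex_of_real (gY Z a w * gY Z (\<i> *s b) w))"
    by (rule ext) (simp only: L_decomp expand2)
  have hb: "has_bochner_integral M (\<lambda>w.
    complex_of_real (gY Z a w * gY Z b w) + complex_of_real (gY Z (\<i> *s a) w * gY Z (\<i> *s b) w)
    + \<i> * complex_of_real (gY Z (\<i> *s a) w * gY Z b w) - \<i> * complex_of_real (gY Z a w * gY Z (\<i> *s b) w))
    (complex_of_real (bb a b) + complex_of_real (bb (\<i> *s a) (\<i> *s b)) + \<i> * complex_of_real (bb (\<i> *s a) b)
     - \<i> * complex_of_real (bb a (\<i> *s b)))"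
    by (intro has_bochner_integral_add has_bochner_integral_diff has_bochner_integral_mult_right
        has_bochner_integral_of_real gauss2_hb)
  have "complex_of_real (bb a b) + complex_of_real (bb (\<i> *s a) (\<i> *s b)) + \<i> * complex_of_real (bb (\<i> *s a) b)
     - \<i> * complex_of_real (bb a (\<i> *s b)) = cinner a (S *v b)"
    unfolding bb_def by (simp add: mv_scale_c cinner_scale_left cinner_scale_right complex_eq_iff)
  thus ?thesis using hb pw by simp
qed

lemma gauss_c2'_hb:
  "has_bochner_integral M (\<lambda>w. cinner a (Z w) * cinner b (Z w)) 0"
proof -
  have pw: "(\<lambda>w. cinner a (Z w) * cinner b (Z w)) = (\<lambda>w.
    complex_of_real (gY Z a w * gY Z b w) - complex_of_real (gY Z (\<i> *s a) w * gY Z (\<i> *s b) w)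
    + \<i> * complex_of_real (gY Z (\<i> *s a) w * gY Z b w) + \<i> * complex_of_real (gY Z a w * gY Z (\<i> *s b) w))"
    by (rule ext) (simp only: L_decomp expand2')
  have hb: "has_bochner_integral M (\<lambda>w.
    complex_of_real (gY Z a w * gY Z b w) - complex_of_real (gY Z (\<i> *s a) w * gY Z (\<i> *s b) w)
    + \<i> * complex_of_real (gY Z (\<i> *s a) w * gY Z b w) + \<i> * complex_of_real (gY Z a w * gY Z (\<i> *s b) w))
    (complex_of_real (bb a b) - complex_of_real (bb (\<i> *s a) (\<i> *s b)) + \<i> * complex_of_real (bb (\<i> *s a) b)
     + \<i> * complex_of_real (bb a (\<i> *s b)))"
    by (intro has_bochner_integral_add has_bochner_integral_diff has_bochner_integral_mult_right
        has_bochner_integral_of_real gauss2_hb)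
  have "complex_of_real (bb a b) - complex_of_real (bb (\<i> *s a) (\<i> *s b)) + \<i> * complex_of_real (bb (\<i> *s a) b)
     + \<i> * complex_of_real (bb a (\<i> *s b)) = 0"
    unfolding bb_def by (simp add: mv_scale_c cinner_scale_left cinner_scale_right complex_eq_iff)
  thus ?thesis using hb pw by simp
qed

lemma gauss_c1_hb: "has_bochner_integral M (\<lambda>w. cinner a (Z w)) 0"
proof -
  have pw: "(\<lambda>w. cinner a (Z w)) = (\<lambda>w. complex_of_real (gY Z a w) + \<i> * complex_of_real (gY Z (\<i> *s a) w))"
    by (rule ext) (rule L_decomp)
  have "has_bochner_integral M (\<lambda>w. complex_of_real (gY Z a w) + \<i> * complex_of_real (gY Z (\<i> *s a) w))
        (complex_of_real 0 + \<i> * complex_of_real 0)"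
    using gY_int1 gY_facts(2)
    by (intro has_bochner_integral_add has_bochner_integral_mult_right has_bochner_integral_of_real)
       (simp_all add: has_bochner_integral_iff)
  thus ?thesis using pw by simp
qed

end


lemma hb_const:
  fixes c :: "'a::{banach, second_countable_topology}"
  assumes "prob_space M" shows "has_bochner_integral M (\<lambda>w. c) c"
proof -
  interpret prob_space M by fact
  show ?thesis by (simp add: has_bochner_integral_iff prob_space)
qed

lemma cn1_facts:
  fixes z :: "'w \<Rightarrow> complex"
  assumes P: "prob_space M" and cn: "is_CN1 M z m v" and v: "v \<ge> 0"
  shows "z \<in> borel_measurable M"
    "has_bochner_integral M z m"
    "has_bochner_integral M (\<lambda>w. z w * cnj (z w)) (complex_of_real ((cmod m)\<^sup>2 + v))"
    "integrable M (\<lambda>w. (cmod (z w))\<^sup>2)"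
proof -
  show zm: "z \<in> borel_measurable M" using cn by (simp add: is_CN1_def)
  have d1: "distr M borel (\<lambda>w. Re (z w)) = real_normal (Re m) (v / 2)"
  proof -
    have "distr M borel (\<lambda>w. Re (cnj 1 * z w)) = real_normal (Re (cnj 1 * m)) ((cmod 1)\<^sup>2 * v / 2)"
      using cn unfolding is_CN1_def by blast
    thus ?thesis by simp
  qed
  have d2: "distr M borel (\<lambda>w. Im (z w)) = real_normal (Im m) (v / 2)"
  proof -
    have "distr M borel (\<lambda>w. Re (cnj \<i> * z w)) = real_normal (Re (cnj \<i> * m)) ((cmod \<i>)\<^sup>2 * v / 2)"
      using cn unfolding is_CN1_def by blast
    thus ?thesis by simp
  qed
  have v2: "v / 2 \<ge> 0" using v by simp
  have mr: "(\<lambda>w. Re (z w)) \<in> borel_measurable M" "(\<lambda>w. Im (z w)) \<in> borel_measurable M" using zm by auto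
  note R = rv_normal_facts[OF mr(1) d1 v2] and I = rv_normal_facts[OF mr(2) d2 v2]
  have R1: "has_bochner_integral M (\<lambda>w. Re (z w) - Re m) 0" using R(1)[of 1] R(2) by (simp add: has_bochner_integral_iff)
  have I1: "has_bochner_integral M (\<lambda>w. Im (z w) - Im m) 0" using I(1)[of 1] I(2) by (simp add: has_bochner_integral_iff)
  have R2: "has_bochner_integral M (\<lambda>w. (Re (z w) - Re m)\<^sup>2) (v/2)" using R(1)[of 2] R(3) by (simp add: has_bochner_integral_iff)
  have I2: "has_bochner_integral M (\<lambda>w. (Im (z w) - Im m)\<^sup>2) (v/2)" using I(1)[of 2] I(3) by (simp add: has_bochner_integral_iff)
  have pw1: "z w = complex_of_real (Re (z w) - Re m) + \<i> * complex_of_real (Im (z w) - Im m) + m" for w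
    by (simp add: complex_eq_iff)
  have "has_bochner_integral M (\<lambda>w. complex_of_real (Re (z w) - Re m) + \<i> * complex_of_real (Im (z w) - Im m) + m)
     (complex_of_real 0 + \<i> * complex_of_real 0 + m)"
    by (intro has_bochner_integral_add has_bochner_integral_mult_right has_bochner_integral_of_real R1 I1
        hb_const[OF P])
  thus "has_bochner_integral M z m" unfolding pw1[symmetric] by simp
  have pw2: "z w * cnj (z w) = complex_of_real ((Re (z w) - Re m)\<^sup>2 + (2 * Re m) * (Re (z w) - Re m) + (Re m)\<^sup>2
     + ((Im (z w) - Im m)\<^sup>2 + (2 * Im m) * (Im (z w) - Im m) + (Im m)\<^sup>2))" for w
    by (simp add: complex_eq_iff power2_eq_square algebra_simps)
  have hr: "has_bochner_integral M (\<lambda>w. (Re (z w) - Re m)\<^sup>2 + (2 * Re m) * (Re (z w) - Re m) + (Re m)\<^sup>2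
     + ((Im (z w) - Im m)\<^sup>2 + (2 * Im m) * (Im (z w) - Im m) + (Im m)\<^sup>2))
     (v/2 + (2 * Re m) * 0 + (Re m)\<^sup>2 + (v/2 + (2 * Im m) * 0 + (Im m)\<^sup>2))"
    by (intro has_bochner_integral_add has_bochner_integral_mult_right R1 R2 I1 I2 hb_const[OF P])
  hence hr': "has_bochner_integral M (\<lambda>w. (Re (z w) - Re m)\<^sup>2 + (2 * Re m) * (Re (z w) - Re m) + (Re m)\<^sup>2
     + ((Im (z w) - Im m)\<^sup>2 + (2 * Im m) * (Im (z w) - Im m) + (Im m)\<^sup>2)) ((cmod m)\<^sup>2 + v)"
    by (simp add: cmod_power2 add.commute)
  show "has_bochner_integral M (\<lambda>w. z w * cnj (z w)) (complex_of_real ((cmod m)\<^sup>2 + v))"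
    unfolding pw2 by (rule has_bochner_integral_of_real[OF hr'])
  have "(\<lambda>w. (cmod (z w))\<^sup>2) = (\<lambda>w. (Re (z w) - Re m)\<^sup>2 + (2 * Re m) * (Re (z w) - Re m) + (Re m)\<^sup>2
     + ((Im (z w) - Im m)\<^sup>2 + (2 * Im m) * (Im (z w) - Im m) + (Im m)\<^sup>2))"
    by (rule ext, subst cmod_power2, simp add: power2_eq_square algebra_simps)
  thus "integrable M (\<lambda>w. (cmod (z w))\<^sup>2)" using hr' integrable.intros by metis
qed


lemma gen_events_Int_stable:
  fixes X :: "'w \<Rightarrow> 'b::topological_space"
  shows "Int_stable (gen_events M X)"
  unfolding Int_stable_def gen_events_def
proof clarify
  fix A B :: "'b set" assume "A \<in> sets borel" "B \<in> sets borel"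
  thus "\<exists>C. (X -` A \<inter> space M) \<inter> (X -` B \<inter> space M) = X -` C \<inter> space M \<and> C \<in> sets borel"
    by (intro exI[of _ "A \<inter> B"]) auto
qed

lemma gen_events_Pow: "gen_events M X \<subseteq> Pow (space M)"
  unfolding gen_events_def by auto

lemma meas_sigma_gen:
  fixes X :: "'w \<Rightarrow> 'b::topological_space"
  assumes "gen_events M X \<subseteq> E" "E \<subseteq> Pow (space M)"
  shows "X \<in> measurable (sigma (space M) E) borel"
proof (rule measurableI)
  fix x assume "x \<in> space (sigma (space M) E)"
  thus "X x \<in> space borel" by simp
next
  fix A :: "'b set" assume "A \<in> sets borel"
  hence "X -` A \<inter> space M \<in> E" using assms(1) unfolding gen_events_def by auto
  hence "X -` A \<inter> space M \<in> sigma_sets (space M) E" by auto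
  thus "X -` A \<inter> space (sigma (space M) E) \<in> sets (sigma (space M) E)"
    using assms(2) by (simp add: sets_measure_of)
qed

lemma split_indep:
  fixes F :: "'i \<Rightarrow> 'w set set" and G H :: "'w \<Rightarrow> complex"
  assumes P: "prob_space M" and ind: "prob_space.indep_sets M F I" and k: "k \<in> I"
    and st: "\<And>j. j \<in> I \<Longrightarrow> Int_stable (F j)"
    and Gm: "G \<in> borel_measurable (sigma (space M) (F k))"
    and Hm: "H \<in> borel_measurable (sigma (space M) (\<Union>j\<in>I - {k}. F j))"
    and Gi: "integrable M G" and Hi: "integrable M H"
  shows "integrable M (\<lambda>w. G w * H w)" "(\<integral>w. G w * H w \<partial>M) = (\<integral>w. G w \<partial>M) * (\<integral>w. H w \<partial>M)"
proof -
  interpret prob_space M by fact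
  define I' where "I' = (\<lambda>b::bool. if b then {k} else I - {k})"
  have U: "(\<Union>b\<in>UNIV. I' b) = I" using k by (auto simp: I'_def)
  have disj: "disjoint_family_on I' UNIV"
    unfolding disjoint_family_on_def I'_def by auto
  have col: "indep_sets (\<lambda>b. sigma_sets (space M) (\<Union>i\<in>I' b. F i)) UNIV"
    by (rule indep_sets_collect_sigma) (use ind U disj st in \<open>auto simp: I'_def split: if_splits\<close>)
  have Fsub: "F j \<subseteq> Pow (space M)" if "j \<in> I" for j
    using ind that unfolding indep_sets_def using sets.sets_into_space by blast
  have Gsets: "G -` A \<inter> space M \<in> sigma_sets (space M) (\<Union>i\<in>I' True. F i)" if "A \<in> sets borel" for A
  proof -
    have "G -` A \<inter> space (sigma (space M) (F k)) \<in> sets (sigma (space M) (F k))"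
      using measurable_sets[OF Gm that] .
    thus ?thesis using Fsub[OF k] by (simp add: sets_measure_of I'_def)
  qed
  have Hsets: "H -` A \<inter> space M \<in> sigma_sets (space M) (\<Union>i\<in>I' False. F i)" if "A \<in> sets borel" for A
  proof -
    have sub: "(\<Union>j\<in>I - {k}. F j) \<subseteq> Pow (space M)" using Fsub by auto
    have "H -` A \<inter> space (sigma (space M) (\<Union>j\<in>I - {k}. F j)) \<in> sets (sigma (space M) (\<Union>j\<in>I - {k}. F j))"
      using measurable_sets[OF Hm that] .
    thus ?thesis using sub by (simp add: sets_measure_of I'_def)
  qed
  have iv: "indep_var borel G borel H"
    unfolding indep_var_def indep_vars_def
    apply (intro conjI ballI)
    subgoal for i using Gi Hi by (auto split: bool.split)
    apply (rule indep_sets_mono_sets[OF col])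
    subgoal for b
    proof (cases b)
      case True
      have "{G -` A \<inter> space M |A. A \<in> sets borel} \<subseteq> sigma_sets (space M) (\<Union>i\<in>I' True. F i)"
        using Gsets by auto
      from sigma_sets_mono[OF this] show ?thesis using True by simp
    next
      case False
      have "{H -` A \<inter> space M |A. A \<in> sets borel} \<subseteq> sigma_sets (space M) (\<Union>i\<in>I' False. F i)"
        using Hsets by auto
      from sigma_sets_mono[OF this] show ?thesis using False by simp
    qed
    done
  show "integrable M (\<lambda>w. G w * H w)" by (rule indep_var_integrable[OF iv Gi Hi])
  show "(\<integral>w. G w * H w \<partial>M) = (\<integral>w. G w \<partial>M) * (\<integral>w. H w \<partial>M)" by (rule indep_var_lebesgue_integral[OF iv Gi Hi])
qed


definition crow :: "complex^'n^'m \<Rightarrow> 'm \<Rightarrow> complex^'n" where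
  "crow P k = (\<chi> j. cnj (P$k$j))"

lemma mv_crow: "(P *v y) $ k = cinner (crow P k) y"
  by (simp add: crow_def cinner_def matrix_vector_mult_def)

lemma cinner_mv_expand: "cinner (P *v u) (R *v v) = (\<Sum>k\<in>UNIV. cnj (cinner (crow P k) u) * cinner (crow R k) v)"
  by (simp add: cinner_def[of "P *v u"] mv_crow)

lemma crow_cinner: "cinner (crow P k) (S *v crow R l) = (P ** S ** adjoint_mat R) $ k $ l"
proof -
  have "cinner (crow P k) (S *v crow R l) = (\<Sum>j\<in>UNIV. \<Sum>m\<in>UNIV. P$k$j * S$j$m * cnj (R$l$m))"
    by (simp add: crow_def cinner_def matrix_vector_mult_def sum_distrib_left mult_ac)
  also have "\<dots> = (P ** S ** adjoint_mat R) $ k $ l"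
    by (simp add: matrix_matrix_mult_def adjoint_mat_def sum_distrib_right sum_distrib_left mult_ac)
       (rule sum.swap)
  finally show ?thesis .
qed

lemma sum_trace: "(\<Sum>k\<in>UNIV. \<Sum>k'\<in>UNIV. (X::complex^'n^'n) $ k' $ k * Y $ k $ k') = trace (X ** Y)"
  by (simp add: trace_def matrix_matrix_mult_def) (rule sum.swap)

lemma trace_adjoint: "trace (adjoint_mat A) = cnj (trace A)"
  by (simp add: trace_def)

lemma hermitian_inv:
  fixes S :: "complex^'n^'n"
  assumes "hermitian S" "invertible S"
  shows "hermitian (matrix_inv S)"
proof -
  have "adjoint_mat (matrix_inv S) ** S = mat 1"
    using assms matrix_inv_props(1)[OF assms(2)] adjoint_mult[of S "matrix_inv S"]
    by (simp add: hermitian_def)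
  hence "S ** adjoint_mat (matrix_inv S) = mat 1" using matrix_left_right_inverse by blast
  hence "matrix_inv S = adjoint_mat (matrix_inv S)" by (rule matrix_inv_unique)
  thus ?thesis by (simp add: hermitian_def)
qed

lemma pd_inv:
  fixes S :: "complex^'n^'n"
  assumes pd: "pos_def S"
  shows "pos_def (matrix_inv S)"
proof -
  have inv: "invertible S" using pos_def_invertible[OF pd] .
  have h: "hermitian S" using pd by (simp add: pos_def_def)
  have "Re (cinner v (matrix_inv S *v v)) > 0" if "v \<noteq> 0" for v
  proof -
    define u where "u = matrix_inv S *v v"
    have Su: "S *v u = v" by (simp add: u_def matrix_vector_mul_assoc matrix_inv_props(1)[OF inv])
    have "u \<noteq> 0" using Su that by auto
    hence "Re (cinner u (S *v u)) > 0" using pd by (simp add: pos_def_def)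
    moreover have "cinner v (matrix_inv S *v v) = cinner (S *v u) u" by (simp add: Su u_def[symmetric])
    moreover have "cinner (S *v u) u = cinner u (S *v u)" by (rule hermitian_cinner[OF h])
    ultimately show ?thesis by simp
  qed
  thus ?thesis using hermitian_inv[OF h inv] by (simp add: pos_def_def)
qed

lemma gram_pd:
  fixes U :: "complex^'d^'n" and S :: "complex^'n^'n"
  assumes pd: "pos_def S" and fcr: "full_column_rank U"
  shows "pos_def (adjoint_mat U ** S ** U)"
proof -
  have h: "hermitian S" using pd by (simp add: pos_def_def)
  have "hermitian (adjoint_mat U ** S ** U)"
    using h by (simp add: hermitian_def adjoint_mult matrix_mul_assoc)
  moreover have "Re (cinner v ((adjoint_mat U ** S ** U) *v v)) > 0" if "v \<noteq> 0" for v
  proof -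
    have "U *v v \<noteq> 0" using fcr that by (auto simp: full_column_rank_def)
    hence "Re (cinner (U *v v) (S *v (U *v v))) > 0" using pd by (simp add: pos_def_def)
    moreover have "cinner v ((adjoint_mat U ** S ** U) *v v) = cinner (U *v v) (S *v (U *v v))"
      by (simp add: matrix_vector_mul_assoc[symmetric] cinner_matrix_right)
    ultimately show ?thesis by simp
  qed
  ultimately show ?thesis by (simp add: pos_def_def)
qed

lemma Pmat_facts:
  fixes U :: "complex^'d^'n" and S :: "complex^'n^'n"
  assumes pd: "pos_def S" and fcr: "full_column_rank U"
  shows "(T_mat U S ** inv_sqrt_mat S) ** U = mat 1"
    "(T_mat U S ** inv_sqrt_mat S) ** S ** adjoint_mat (T_mat U S ** inv_sqrt_mat S) = C_mat U S"
    "hermitian (C_mat U S)"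
proof -
  define G where "G = adjoint_mat U ** matrix_inv S ** U"
  have Gpd: "pos_def G" unfolding G_def by (rule gram_pd[OF pd_inv[OF pd] fcr])
  have Ginv: "invertible G" by (rule pos_def_invertible[OF Gpd])
  have C: "C_mat U S = matrix_inv G" by (simp add: C_mat_def G_def)
  have CG: "C_mat U S ** G = mat 1" using matrix_inv_props(2)[OF Ginv] C by simp
  have hC: "hermitian (C_mat U S)" unfolding C
    by (rule hermitian_inv[OF _ Ginv]) (use Gpd in \<open>simp add: pos_def_def\<close>)
  thus "hermitian (C_mat U S)" .
  have Sinv: "invertible S" by (rule pos_def_invertible[OF pd])
  have hSi: "hermitian (matrix_inv S)" using pd_inv[OF pd] by (simp add: pos_def_def)
  have P: "T_mat U S ** inv_sqrt_mat S = C_mat U S ** (adjoint_mat U ** matrix_inv S)"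
    by (simp add: T_mat_def matrix_mul_assoc inv_sqrt_sq[OF pd, symmetric])
  show "(T_mat U S ** inv_sqrt_mat S) ** U = mat 1"
    unfolding P using CG by (simp add: G_def matrix_mul_assoc)
  have adjP: "adjoint_mat (T_mat U S ** inv_sqrt_mat S) = matrix_inv S ** U ** C_mat U S"
    unfolding P using hC hSi by (simp add: adjoint_mult hermitian_def matrix_mul_assoc)
  have "(T_mat U S ** inv_sqrt_mat S) ** S ** adjoint_mat (T_mat U S ** inv_sqrt_mat S)
      = C_mat U S ** adjoint_mat U ** (matrix_inv S ** S) ** matrix_inv S ** U ** C_mat U S"
    by (simp only: adjP, simp only: P, simp add: matrix_mul_assoc)
  also have "\<dots> = C_mat U S ** G ** C_mat U S"
    by (simp add: matrix_inv_props(2)[OF Sinv] G_def matrix_mul_assoc)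
  also have "\<dots> = C_mat U S" using CG by simp
  finally show "(T_mat U S ** inv_sqrt_mat S) ** S ** adjoint_mat (T_mat U S ** inv_sqrt_mat S) = C_mat U S" .
qed


lemma pd_psd: "pos_def S \<Longrightarrow> Re (cinner a (S *v a)) \<ge> 0"
  by (cases "a = 0") (auto simp: pos_def_def less_imp_le)

locale model =
  fixes M :: "'w measure" and L :: nat
    and U :: "complex^'d^'n" and Sth :: "complex^'d^'d"
    and Sr Ss :: "complex^'n^'n"
    and va vb :: real and mub :: complex
    and x :: "'w \<Rightarrow> complex^'n"
    and al be :: "nat \<Rightarrow> 'w \<Rightarrow> complex"
    and dr ds :: "nat \<Rightarrow> 'w \<Rightarrow> complex^'n"
  assumes P: "prob_space M"
    and fcr: "full_column_rank U"
    and hSth: "hermitian Sth" and psdSth: "pos_semidef Sth"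
    and pdr: "pos_def Sr" and pds: "pos_def Ss"
    and va: "va \<ge> 0" and vb: "vb \<ge> 0"
    and cnx: "is_CN M x 0 (U ** Sth ** adjoint_mat U)"
    and cna: "\<And>i. i < L \<Longrightarrow> is_CN1 M (al i) 0 va"
    and cnb: "\<And>i. i < L \<Longrightarrow> is_CN1 M (be i) mub vb"
    and cnr: "\<And>i. i < L \<Longrightarrow> is_CN M (dr i) 0 Sr"
    and cns: "\<And>i. i < L \<Longrightarrow> is_CN M (ds i) 0 Ss"
    and ind: "model_indep M L x al be dr ds"
begin

sublocale prob_space M by (rule P)

definition "K = U ** Sth ** adjoint_mat U"
definition "Pr = T_mat U Sr ** inv_sqrt_mat Sr"
definition "Ps = T_mat U Ss ** inv_sqrt_mat Ss"
definition "MM = M_U U Sr Ss"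
definition "Q = MM ** Ps"
definition "Cr = C_mat U Sr"
definition "Cs = C_mat U Ss"

lemma hK: "hermitian K"
  using hSth by (simp add: K_def hermitian_def adjoint_mult matrix_mul_assoc)

lemma psdK: "Re (cinner a (K *v a)) \<ge> 0"
proof -
  have "cinner a (K *v a) = cinner (adjoint_mat U *v a) (Sth *v (adjoint_mat U *v a))"
    by (simp add: K_def matrix_vector_mul_assoc[symmetric] cinner_matrix_right)
  thus ?thesis using psdSth by (simp add: pos_semidef_def)
qed

lemma gx: "cgauss M x K"
  using cnx hK psdK by (unfold_locales) (auto simp: K_def)

lemma gr: "i < L \<Longrightarrow> cgauss M (dr i) Sr"
  using cnr pdr pd_psd[OF pdr] by (unfold_locales) (auto simp: pos_def_def)

lemma gs: "i < L \<Longrightarrow> cgauss M (ds i) Ss"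
  using cns pds pd_psd[OF pds] by (unfold_locales) (auto simp: pos_def_def)

lemma PrU: "Pr ** U = mat 1" unfolding Pr_def by (rule Pmat_facts(1)[OF pdr fcr])
lemma PsU: "Ps ** U = mat 1" unfolding Ps_def by (rule Pmat_facts(1)[OF pds fcr])
lemma PrSr: "Pr ** Sr ** adjoint_mat Pr = Cr" unfolding Pr_def Cr_def by (rule Pmat_facts(2)[OF pdr fcr])
lemma PsSs: "Ps ** Ss ** adjoint_mat Ps = Cs" unfolding Ps_def Cs_def by (rule Pmat_facts(2)[OF pds fcr])

lemma PKP: "A ** U = mat 1 \<Longrightarrow> B ** U = mat 1 \<Longrightarrow> A ** K ** adjoint_mat B = Sth"
proof -
  assume a: "A ** U = mat 1" "B ** U = mat 1"
  have "A ** K ** adjoint_mat B = (A ** U) ** Sth ** adjoint_mat (B ** U)"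
    by (simp add: K_def adjoint_mult matrix_mul_assoc)
  thus ?thesis using a by simp
qed

lemma F1: "Pr ** K ** adjoint_mat Pr = Sth" by (rule PKP[OF PrU PrU])
lemma F2: "Q ** K ** adjoint_mat Pr = MM ** Sth"
  using PKP[OF PsU PrU] by (simp add: Q_def matrix_mul_assoc[symmetric])
lemma F3: "Pr ** K ** adjoint_mat Q = Sth ** adjoint_mat MM"
  using PKP[OF PrU PsU] by (simp add: Q_def adjoint_mult matrix_mul_assoc)
lemma F4: "Q ** K ** adjoint_mat Q = MM ** Sth ** adjoint_mat MM"
proof -
  have "Q ** K ** adjoint_mat Q = MM ** (Ps ** K ** adjoint_mat Ps) ** adjoint_mat MM"
    by (simp add: Q_def adjoint_mult matrix_mul_assoc)
  thus ?thesis using PKP[OF PsU PsU] by simp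
qed
lemma F6: "Q ** Ss ** adjoint_mat Q = MM ** Cs ** adjoint_mat MM"
proof -
  have "Q ** Ss ** adjoint_mat Q = MM ** (Ps ** Ss ** adjoint_mat Ps) ** adjoint_mat MM"
    by (simp add: Q_def adjoint_mult matrix_mul_assoc)
  thus ?thesis using PsSs by simp
qed

lemma hCr: "hermitian Cr" unfolding Cr_def by (rule Pmat_facts(3)[OF pdr fcr])

definition Fam :: "rv_idx \<Rightarrow> 'w set set" where
  "Fam = (\<lambda>k. case k of IX \<Rightarrow> gen_events M x
                    | IAlpha i \<Rightarrow> gen_events M (al i)
                    | IBeta i \<Rightarrow> gen_events M (be i)
                    | IDr i \<Rightarrow> gen_events M (dr i)
                    | IDs i \<Rightarrow> gen_events M (ds i))"

definition Idx :: "rv_idx set" where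
  "Idx = {IX} \<union> IAlpha ` {..<L} \<union> IBeta ` {..<L} \<union> IDr ` {..<L} \<union> IDs ` {..<L}"

lemma indep: "indep_sets Fam Idx"
  using ind unfolding model_indep_def Fam_def Idx_def .

lemma Fam_stable: "Int_stable (Fam k)"
  by (cases k) (simp_all add: Fam_def gen_events_Int_stable)

lemma Fam_Pow: "Fam k \<subseteq> Pow (space M)"
  by (cases k) (simp_all add: Fam_def gen_events_Pow)

definition "Sig k = sigma (space M) (Fam k)"
definition "Oth k = sigma (space M) (\<Union>j\<in>Idx - {k}. Fam j)"

lemma Oth_sub: "subalgebra M (Oth k)"
proof -
  have "(\<Union>j\<in>Idx - {k}. Fam j) \<subseteq> sets M"
    using indep unfolding indep_sets_def by auto
  moreover have "(\<Union>j\<in>Idx - {k}. Fam j) \<subseteq> Pow (space M)" using Fam_Pow by auto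
  ultimately show ?thesis
    unfolding subalgebra_def Oth_def by (simp add: sets.sigma_sets_subset)
qed

lemma Sig_sub: "k \<in> Idx \<Longrightarrow> subalgebra M (Sig k)"
proof -
  assume k: "k \<in> Idx"
  have "Fam k \<subseteq> sets M" using indep k unfolding indep_sets_def by auto
  thus ?thesis using Fam_Pow[of k] unfolding subalgebra_def Sig_def by (simp add: sets.sigma_sets_subset)
qed

lemma split:
  fixes G H :: "'w \<Rightarrow> complex"
  assumes k: "k \<in> Idx" and Gm: "G \<in> borel_measurable (Sig k)" and Hm: "H \<in> borel_measurable (Oth k)"
    and Gi: "integrable M G" and Hi: "integrable M H"
  shows "integrable M (\<lambda>w. G w * H w)" "(\<integral>w. G w * H w \<partial>M) = (\<integral>w. G w \<partial>M) * (\<integral>w. H w \<partial>M)"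
  using split_indep[OF P indep k Fam_stable Gm[unfolded Sig_def] Hm[unfolded Oth_def] Gi Hi] by auto

lemma gen_sub_Oth: "j \<in> Idx \<Longrightarrow> j \<noteq> k \<Longrightarrow> Fam j \<subseteq> (\<Union>j\<in>Idx - {k}. Fam j)"
  by auto

lemma Oth_Pow: "(\<Union>j\<in>Idx - {k}. Fam j) \<subseteq> Pow (space M)" using Fam_Pow by auto

lemma x_Oth: "k \<noteq> IX \<Longrightarrow> x \<in> borel_measurable (Oth k)"
  unfolding Oth_def by (rule meas_sigma_gen[OF _ Oth_Pow]) (use gen_sub_Oth[of IX k] in \<open>auto simp: Fam_def Idx_def\<close>)
lemma al_Oth: "i < L \<Longrightarrow> k \<noteq> IAlpha i \<Longrightarrow> al i \<in> borel_measurable (Oth k)"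
  unfolding Oth_def by (rule meas_sigma_gen[OF _ Oth_Pow]) (use gen_sub_Oth[of "IAlpha i" k] in \<open>auto simp: Fam_def Idx_def\<close>)
lemma be_Oth: "i < L \<Longrightarrow> k \<noteq> IBeta i \<Longrightarrow> be i \<in> borel_measurable (Oth k)"
  unfolding Oth_def by (rule meas_sigma_gen[OF _ Oth_Pow]) (use gen_sub_Oth[of "IBeta i" k] in \<open>auto simp: Fam_def Idx_def\<close>)
lemma dr_Oth: "i < L \<Longrightarrow> k \<noteq> IDr i \<Longrightarrow> dr i \<in> borel_measurable (Oth k)"
  unfolding Oth_def by (rule meas_sigma_gen[OF _ Oth_Pow]) (use gen_sub_Oth[of "IDr i" k] in \<open>auto simp: Fam_def Idx_def\<close>)
lemma ds_Oth: "i < L \<Longrightarrow> k \<noteq> IDs i \<Longrightarrow> ds i \<in> borel_measurable (Oth k)"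
  unfolding Oth_def by (rule meas_sigma_gen[OF _ Oth_Pow]) (use gen_sub_Oth[of "IDs i" k] in \<open>auto simp: Fam_def Idx_def\<close>)

lemma x_Sig: "x \<in> borel_measurable (Sig IX)"
  unfolding Sig_def by (rule meas_sigma_gen) (simp_all add: Fam_def gen_events_Pow)
lemma al_Sig: "al i \<in> borel_measurable (Sig (IAlpha i))"
  unfolding Sig_def by (rule meas_sigma_gen) (simp_all add: Fam_def gen_events_Pow)
lemma be_Sig: "be i \<in> borel_measurable (Sig (IBeta i))"
  unfolding Sig_def by (rule meas_sigma_gen) (simp_all add: Fam_def gen_events_Pow)
lemma dr_Sig: "dr i \<in> borel_measurable (Sig (IDr i))"
  unfolding Sig_def by (rule meas_sigma_gen) (simp_all add: Fam_def gen_events_Pow)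
lemma ds_Sig: "ds i \<in> borel_measurable (Sig (IDs i))"
  unfolding Sig_def by (rule meas_sigma_gen) (simp_all add: Fam_def gen_events_Pow)

lemma idx: "IX \<in> Idx" "i < L \<Longrightarrow> IAlpha i \<in> Idx" "i < L \<Longrightarrow> IBeta i \<in> Idx"
  "i < L \<Longrightarrow> IDr i \<in> Idx" "i < L \<Longrightarrow> IDs i \<in> Idx"
  by (auto simp: Idx_def)

end


lemma meas_cnj[measurable (raw)]: "f \<in> borel_measurable M \<Longrightarrow> (\<lambda>w. cnj (f w)) \<in> borel_measurable M"
  by (rule measurable_compose[OF _ borel_measurable_continuous_onI[OF continuous_on_cnj[OF continuous_on_id]]])

context prob_space
begin

definition Lsq :: "('a \<Rightarrow> complex) \<Rightarrow> bool" where
  "Lsq f \<longleftrightarrow> f \<in> borel_measurable M \<and> integrable M (\<lambda>w. f w * cnj (f w))"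

lemma norm_mult_cnj: "norm (z * cnj z) = (cmod z)\<^sup>2"
  by (simp add: norm_mult power2_eq_square)

lemma Lsq_meas: "Lsq f \<Longrightarrow> f \<in> borel_measurable M" by (simp add: Lsq_def)

lemma Lsq_prod_int:
  assumes "Lsq f" "Lsq g" shows "integrable M (\<lambda>w. f w * g w)"
proof (rule Bochner_Integration.integrable_bound[of _ "\<lambda>w. f w * cnj (f w) + g w * cnj (g w)"])
  show "integrable M (\<lambda>w. f w * cnj (f w) + g w * cnj (g w))" using assms by (simp add: Lsq_def)
  have [measurable]: "f \<in> borel_measurable M" "g \<in> borel_measurable M" using assms by (auto simp: Lsq_def)
  show "(\<lambda>w. f w * g w) \<in> borel_measurable M" by measurable
  show "AE w in M. norm (f w * g w) \<le> norm (f w * cnj (f w) + g w * cnj (g w))"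
  proof (rule AE_I2)
    fix w
    have e: "f w * cnj (f w) + g w * cnj (g w) = complex_of_real ((cmod (f w))\<^sup>2 + (cmod (g w))\<^sup>2)"
      by (simp add: mult_cnj_self)
    have "2 * cmod (f w) * cmod (g w) \<le> (cmod (f w))\<^sup>2 + (cmod (g w))\<^sup>2" by (rule sum_squares_bound)
    moreover have "0 \<le> cmod (f w) * cmod (g w)" by simp
    ultimately have "cmod (f w) * cmod (g w) \<le> (cmod (f w))\<^sup>2 + (cmod (g w))\<^sup>2" by linarith
    thus "norm (f w * g w) \<le> norm (f w * cnj (f w) + g w * cnj (g w))"
      unfolding e norm_mult norm_of_real by simp
  qed
qed

lemma Lsq_cnj: assumes "Lsq f" shows "Lsq (\<lambda>w. cnj (f w))"
proof -
  have [measurable]: "f \<in> borel_measurable M" using assms by (auto simp: Lsq_def)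
  have "(\<lambda>w. cnj (f w)) \<in> borel_measurable M" by measurable
  thus ?thesis using assms unfolding Lsq_def by (simp add: mult.commute)
qed

lemma Lsq_int: assumes "Lsq f" shows "integrable M f"
proof -
  have "integrable M (\<lambda>w. f w * 1)"
    by (rule Lsq_prod_int[OF assms]) (simp add: Lsq_def)
  thus ?thesis by simp
qed

lemma Lsq_add: assumes "Lsq f" "Lsq g" shows "Lsq (\<lambda>w. f w + g w)"
proof -
  have "integrable M (\<lambda>w. f w * cnj (f w) + g w * cnj (g w) + f w * cnj (g w) + g w * cnj (f w))"
    using assms Lsq_prod_int[OF assms(1) Lsq_cnj[OF assms(2)]] Lsq_prod_int[OF assms(2) Lsq_cnj[OF assms(1)]]
    by (simp add: Lsq_def)
  moreover have "(\<lambda>w. (f w + g w) * cnj (f w + g w)) = (\<lambda>w. f w * cnj (f w) + g w * cnj (g w) + f w * cnj (g w) + g w * cnj (f w))"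
    by (rule ext) (simp add: algebra_simps)
  moreover have [measurable]: "f \<in> borel_measurable M" "g \<in> borel_measurable M" using assms by (auto simp: Lsq_def)
  moreover have "(\<lambda>w. f w + g w) \<in> borel_measurable M" by measurable
  ultimately show ?thesis by (simp add: Lsq_def)
qed

lemma Lsq_cmult: assumes "Lsq f" shows "Lsq (\<lambda>w. c * f w)"
proof -
  have "(\<lambda>w. (c * f w) * cnj (c * f w)) = (\<lambda>w. (c * cnj c) * (f w * cnj (f w)))"
    by (rule ext) (simp add: algebra_simps)
  moreover have [measurable]: "f \<in> borel_measurable M" using assms by (auto simp: Lsq_def)
  moreover have "(\<lambda>w. c * f w) \<in> borel_measurable M" by measurable
  ultimately show ?thesis using assms by (simp add: Lsq_def)
qed

lemma Lsq_zero: "Lsq (\<lambda>w. 0)" by (simp add: Lsq_def)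

lemma Lsq_sum: "finite S \<Longrightarrow> (\<And>k. k \<in> S \<Longrightarrow> Lsq (f k)) \<Longrightarrow> Lsq (\<lambda>w. \<Sum>k\<in>S. f k w)"
proof (induction S rule: finite_induct)
  case empty thus ?case by (simp add: Lsq_zero)
next
  case (insert a S)
  thus ?case by (simp add: Lsq_add)
qed

lemma Lsq_mult_cnj_int: "Lsq f \<Longrightarrow> Lsq g \<Longrightarrow> integrable M (\<lambda>w. f w * cnj (g w))"
  by (rule Lsq_prod_int) (auto intro: Lsq_cnj)

end


declare meas_cinner[measurable (raw)] meas_mv[measurable (raw)] meas_smult[measurable (raw)]

context model
begin

definition "a k w = cinner (crow Pr k) (x w)"
definition "b k w = cinner (crow Q k) (x w)"
definition "ar i k w = cinner (crow Pr k) (dr i w)"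
definition "bs i k w = cinner (crow Q k) (ds i w)"
definition "T11 w = (\<Sum>k\<in>UNIV. cnj (a k w) * b k w)"
definition "T1s i w = (\<Sum>k\<in>UNIV. cnj (a k w) * bs i k w)"
definition "Tr1 i w = (\<Sum>k\<in>UNIV. cnj (ar i k w) * b k w)"
definition "Trs i w = (\<Sum>k\<in>UNIV. cnj (ar i k w) * bs i k w)"
definition "Zi i w = cnj (be i w) * T11 w + Tr1 i w"
definition "Yi i w = cnj (be i w) * T1s i w + Trs i w"
definition "R i k w = be i w * a k w + ar i k w"
definition "cc h i w = (if h then al i w * Zi i w else 0) + Yi i w"

lemma Yi_R: "Yi i w = (\<Sum>k\<in>UNIV. cnj (R i k w) * bs i k w)"
  by (simp add: Yi_def T1s_def Trs_def R_def sum_distrib_left sum.distrib algebra_simps)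

lemma c_formula: "c_stat U Sr Ss (meas_r x be dr i w) (meas_s h x al ds i w) = cc h i w"
proof -
  have cs: "c_stat U Sr Ss r s = cinner (Pr *v r) (Q *v s)" for r s
    by (simp add: c_stat_def Pr_def Ps_def Q_def MM_def matrix_vector_mul_assoc)
  have "cinner (Pr *v (be i w *s x w + dr i w)) (Q *v (al i w *s x w + ds i w))
      = (\<Sum>k\<in>UNIV. cnj (be i w * a k w + ar i k w) * (al i w * b k w + bs i k w))"
    by (subst cinner_mv_expand) (simp add: cinner_add_right cinner_scale_right a_def ar_def b_def bs_def)
  also have "\<dots> = al i w * Zi i w + Yi i w"
    by (simp add: Zi_def Yi_def T11_def Tr1_def T1s_def Trs_def sum_distrib_left sum.distrib algebra_simps)
  finally have h1: "cinner (Pr *v (be i w *s x w + dr i w)) (Q *v (al i w *s x w + ds i w)) = al i w * Zi i w + Yi i w" .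
  have "cinner (Pr *v (be i w *s x w + dr i w)) (Q *v ds i w)
      = (\<Sum>k\<in>UNIV. cnj (be i w * a k w + ar i k w) * bs i k w)"
    by (subst cinner_mv_expand) (simp add: cinner_add_right cinner_scale_right a_def ar_def b_def bs_def)
  also have "\<dots> = Yi i w"
    by (simp add: Yi_def T1s_def Trs_def sum_distrib_left sum.distrib algebra_simps)
  finally have h0: "cinner (Pr *v (be i w *s x w + dr i w)) (Q *v ds i w) = Yi i w" .
  show ?thesis
    by (cases h) (simp_all add: cs meas_r_def meas_s_def cc_def h1 h0)
qed

end


context cgauss
begin
lemma Lsq_lin: "prob_space M \<Longrightarrow> prob_space.Lsq M (\<lambda>w. cinner p (Z w))"
  using gauss_c2_hb[of p p] by (simp add: prob_space.Lsq_def integrable.intros)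
end

context model
begin

lemma a_meas: "x \<in> borel_measurable N \<Longrightarrow> a k \<in> borel_measurable N"
  unfolding a_def[abs_def] by measurable
lemma b_meas: "x \<in> borel_measurable N \<Longrightarrow> b k \<in> borel_measurable N"
  unfolding b_def[abs_def] by measurable
lemma ar_meas: "dr i \<in> borel_measurable N \<Longrightarrow> ar i k \<in> borel_measurable N"
  unfolding ar_def[abs_def] by measurable
lemma bs_meas: "ds i \<in> borel_measurable N \<Longrightarrow> bs i k \<in> borel_measurable N"
  unfolding bs_def[abs_def] by measurable
lemma T11_meas: "x \<in> borel_measurable N \<Longrightarrow> T11 \<in> borel_measurable N"
proof -
  assume [measurable]: "x \<in> borel_measurable N"
  note [measurable] = a_meas b_meas
  show ?thesis unfolding T11_def[abs_def] by measurable
qed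
lemma T1s_meas: "x \<in> borel_measurable N \<Longrightarrow> ds i \<in> borel_measurable N \<Longrightarrow> T1s i \<in> borel_measurable N"
proof -
  assume [measurable]: "x \<in> borel_measurable N" "ds i \<in> borel_measurable N"
  note [measurable] = a_meas bs_meas
  show ?thesis unfolding T1s_def[abs_def] by measurable
qed
lemma Tr1_meas: "x \<in> borel_measurable N \<Longrightarrow> dr i \<in> borel_measurable N \<Longrightarrow> Tr1 i \<in> borel_measurable N"
proof -
  assume [measurable]: "x \<in> borel_measurable N" "dr i \<in> borel_measurable N"
  note [measurable] = ar_meas b_meas
  show ?thesis unfolding Tr1_def[abs_def] by measurable
qed
lemma Trs_meas: "dr i \<in> borel_measurable N \<Longrightarrow> ds i \<in> borel_measurable N \<Longrightarrow> Trs i \<in> borel_measurable N"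
proof -
  assume [measurable]: "dr i \<in> borel_measurable N" "ds i \<in> borel_measurable N"
  note [measurable] = ar_meas bs_meas
  show ?thesis unfolding Trs_def[abs_def] by measurable
qed
lemma Zi_meas: "x \<in> borel_measurable N \<Longrightarrow> be i \<in> borel_measurable N \<Longrightarrow> dr i \<in> borel_measurable N \<Longrightarrow> Zi i \<in> borel_measurable N"
proof -
  assume [measurable]: "x \<in> borel_measurable N" "be i \<in> borel_measurable N" "dr i \<in> borel_measurable N"
  note [measurable] = T11_meas Tr1_meas
  show ?thesis unfolding Zi_def[abs_def] by measurable
qed
lemma Yi_meas: "x \<in> borel_measurable N \<Longrightarrow> be i \<in> borel_measurable N \<Longrightarrow> dr i \<in> borel_measurable N \<Longrightarrow> ds i \<in> borel_measurable N \<Longrightarrow> Yi i \<in> borel_measurable N"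
proof -
  assume [measurable]: "x \<in> borel_measurable N" "be i \<in> borel_measurable N" "dr i \<in> borel_measurable N" "ds i \<in> borel_measurable N"
  note [measurable] = T1s_meas Trs_meas
  show ?thesis unfolding Yi_def[abs_def] by measurable
qed
lemma R_meas: "x \<in> borel_measurable N \<Longrightarrow> be i \<in> borel_measurable N \<Longrightarrow> dr i \<in> borel_measurable N \<Longrightarrow> R i k \<in> borel_measurable N"
proof -
  assume [measurable]: "x \<in> borel_measurable N" "be i \<in> borel_measurable N" "dr i \<in> borel_measurable N"
  note [measurable] = a_meas ar_meas
  show ?thesis unfolding R_def[abs_def] by measurable
qed
lemma cc_meas: "x \<in> borel_measurable N \<Longrightarrow> al i \<in> borel_measurable N \<Longrightarrow> be i \<in> borel_measurable N \<Longrightarrow> dr i \<in> borel_measurable N \<Longrightarrow> ds i \<in> borel_measurable N \<Longrightarrow> cc h i \<in> borel_measurable N"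
proof -
  assume [measurable]: "x \<in> borel_measurable N" "al i \<in> borel_measurable N" "be i \<in> borel_measurable N" "dr i \<in> borel_measurable N" "ds i \<in> borel_measurable N"
  note [measurable] = Zi_meas Yi_meas
  show ?thesis unfolding cc_def[abs_def] by (cases h) simp_all
qed

lemma xM[measurable]: "x \<in> borel_measurable M" using cgauss.Zmeas[OF gx] .
lemma alM: "i < L \<Longrightarrow> al i \<in> borel_measurable M" using cn1_facts(1)[OF P cna va] .
lemma beM: "i < L \<Longrightarrow> be i \<in> borel_measurable M" using cn1_facts(1)[OF P cnb vb] .
lemma drM: "i < L \<Longrightarrow> dr i \<in> borel_measurable M" using cgauss.Zmeas[OF gr] .
lemma dsM: "i < L \<Longrightarrow> ds i \<in> borel_measurable M" using cgauss.Zmeas[OF gs] .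

lemma Lsq_split:
  fixes G H :: "'w \<Rightarrow> complex"
  assumes k: "k \<in> Idx" and Gm[measurable]: "G \<in> borel_measurable (Sig k)" and Hm[measurable]: "H \<in> borel_measurable (Oth k)"
    and G: "Lsq G" and H: "Lsq H"
  shows "Lsq (\<lambda>w. G w * H w)"
proof -
  have "integrable M (\<lambda>w. (G w * cnj (G w)) * (H w * cnj (H w)))"
    by (rule split(1)[OF k]) (use G H in \<open>simp_all add: Lsq_def\<close>)
  moreover have "(\<lambda>w. G w * H w) \<in> borel_measurable M" using G H Lsq_meas by measurable
  ultimately show ?thesis unfolding Lsq_def by (simp add: mult_ac)
qed

lemma Lsq_split':
  fixes G H :: "'w \<Rightarrow> complex"
  assumes k: "k \<in> Idx" and "G \<in> borel_measurable (Sig k)" and "H \<in> borel_measurable (Oth k)"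
    and "Lsq G" "Lsq H"
  shows "Lsq (\<lambda>w. H w * G w)"
  using Lsq_split[OF assms] by (simp add: mult.commute)

lemma Lsq_a: "Lsq (a k)" unfolding a_def[abs_def] using cgauss.Lsq_lin[OF gx P] .
lemma Lsq_b: "Lsq (b k)" unfolding b_def[abs_def] using cgauss.Lsq_lin[OF gx P] .
lemma Lsq_ar: "i < L \<Longrightarrow> Lsq (ar i k)" unfolding ar_def[abs_def] using cgauss.Lsq_lin[OF gr P] .
lemma Lsq_bs: "i < L \<Longrightarrow> Lsq (bs i k)" unfolding bs_def[abs_def] using cgauss.Lsq_lin[OF gs P] .
lemma Lsq_al: assumes "i < L" shows "Lsq (al i)"
  using cn1_facts(1)[OF P cna[OF assms] va] integrable.intros[OF cn1_facts(3)[OF P cna[OF assms] va]]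
  by (simp add: Lsq_def)
lemma Lsq_be: assumes "i < L" shows "Lsq (be i)"
  using cn1_facts(1)[OF P cnb[OF assms] vb] integrable.intros[OF cn1_facts(3)[OF P cnb[OF assms] vb]]
  by (simp add: Lsq_def)

lemma Lsq_ab: "Lsq (\<lambda>w. cnj (a k w) * b l w)"
proof -
  have "integrable M (\<lambda>w. cnj (cinner (crow Pr k) (x w)) * cinner (crow Q l) (x w) * cinner (crow Pr k) (x w) * cnj (cinner (crow Q l) (x w)))"
    using cgauss.gauss_c4_hb[OF gx] by (rule integrable.intros)
  moreover have "(\<lambda>w. cnj (a k w) * b l w) \<in> borel_measurable M" using a_meas b_meas xM by measurable
  ultimately show ?thesis unfolding Lsq_def by (simp add: a_def b_def mult_ac)
qed

lemma Lsq_T11: "Lsq T11"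
  unfolding T11_def[abs_def] by (rule Lsq_sum) (auto intro: Lsq_ab)

lemma Lsq_T1s: assumes i: "i < L" shows "Lsq (T1s i)"
  unfolding T1s_def[abs_def]
proof (rule Lsq_sum)
  fix k
  have [measurable]: "a k \<in> borel_measurable (Oth (IDs i))" by (rule a_meas, rule x_Oth) simp
  have [measurable]: "bs i k \<in> borel_measurable (Sig (IDs i))" by (rule bs_meas[OF ds_Sig])
  show "Lsq (\<lambda>w. cnj (a k w) * bs i k w)"
    by (rule Lsq_split'[OF idx(5)[OF i]]) (measurable, measurable, rule Lsq_bs[OF i], rule Lsq_cnj[OF Lsq_a])
qed simp

lemma Lsq_Tr1: assumes i: "i < L" shows "Lsq (Tr1 i)"
  unfolding Tr1_def[abs_def]
proof (rule Lsq_sum)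
  fix k
  have [measurable]: "b k \<in> borel_measurable (Oth (IDr i))" by (rule b_meas, rule x_Oth) simp
  have [measurable]: "ar i k \<in> borel_measurable (Sig (IDr i))" by (rule ar_meas[OF dr_Sig])
  show "Lsq (\<lambda>w. cnj (ar i k w) * b k w)"
    by (rule Lsq_split[OF idx(4)[OF i]]) (measurable, measurable, rule Lsq_cnj[OF Lsq_ar[OF i]], rule Lsq_b)
qed simp

lemma Lsq_Trs: assumes i: "i < L" shows "Lsq (Trs i)"
  unfolding Trs_def[abs_def]
proof (rule Lsq_sum)
  fix k
  have [measurable]: "ar i k \<in> borel_measurable (Oth (IDs i))" by (rule ar_meas, rule dr_Oth[OF i]) simp
  have [measurable]: "bs i k \<in> borel_measurable (Sig (IDs i))" by (rule bs_meas[OF ds_Sig])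
  show "Lsq (\<lambda>w. cnj (ar i k w) * bs i k w)"
    by (rule Lsq_split'[OF idx(5)[OF i]]) (measurable, measurable, rule Lsq_bs[OF i], rule Lsq_cnj[OF Lsq_ar[OF i]])
qed simp

lemma Lsq_Zi: assumes i: "i < L" shows "Lsq (Zi i)"
  unfolding Zi_def[abs_def]
proof (rule Lsq_add)
  have [measurable]: "T11 \<in> borel_measurable (Oth (IBeta i))" by (rule T11_meas, rule x_Oth) simp
  have [measurable]: "be i \<in> borel_measurable (Sig (IBeta i))" by (rule be_Sig)
  show "Lsq (\<lambda>w. cnj (be i w) * T11 w)"
    by (rule Lsq_split[OF idx(3)[OF i]]) (measurable, measurable, rule Lsq_cnj[OF Lsq_be[OF i]], rule Lsq_T11)
  show "Lsq (Tr1 i)" by (rule Lsq_Tr1[OF i])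
qed

lemma Lsq_Yi: assumes i: "i < L" shows "Lsq (Yi i)"
  unfolding Yi_def[abs_def]
proof (rule Lsq_add)
  have [measurable]: "T1s i \<in> borel_measurable (Oth (IBeta i))"
    by (rule T1s_meas; rule x_Oth ds_Oth[OF i]; simp)
  have [measurable]: "be i \<in> borel_measurable (Sig (IBeta i))" by (rule be_Sig)
  show "Lsq (\<lambda>w. cnj (be i w) * T1s i w)"
    by (rule Lsq_split[OF idx(3)[OF i]]) (measurable, measurable, rule Lsq_cnj[OF Lsq_be[OF i]], rule Lsq_T1s[OF i])
  show "Lsq (Trs i)" by (rule Lsq_Trs[OF i])
qed

lemma Lsq_R: assumes i: "i < L" shows "Lsq (R i k)"
  unfolding R_def[abs_def]
proof (rule Lsq_add)
  have [measurable]: "a k \<in> borel_measurable (Oth (IBeta i))" by (rule a_meas, rule x_Oth) simp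
  have [measurable]: "be i \<in> borel_measurable (Sig (IBeta i))" by (rule be_Sig)
  show "Lsq (\<lambda>w. be i w * a k w)"
    by (rule Lsq_split[OF idx(3)[OF i]]) (measurable, measurable, rule Lsq_be[OF i], rule Lsq_a)
  show "Lsq (ar i k)" by (rule Lsq_ar[OF i])
qed

lemma Lsq_cc: assumes i: "i < L" shows "Lsq (cc h i)"
  unfolding cc_def[abs_def]
proof (rule Lsq_add)
  have [measurable]: "Zi i \<in> borel_measurable (Oth (IAlpha i))"
    by (rule Zi_meas; rule x_Oth be_Oth[OF i] dr_Oth[OF i]; simp)
  have [measurable]: "al i \<in> borel_measurable (Sig (IAlpha i))" by (rule al_Sig)
  have "Lsq (\<lambda>w. al i w * Zi i w)"
    by (rule Lsq_split[OF idx(2)[OF i]]) (measurable, measurable, rule Lsq_al[OF i], rule Lsq_Zi[OF i])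
  thus "Lsq (\<lambda>w. if h then al i w * Zi i w else 0)" by (cases h) (simp_all add: Lsq_zero)
  show "Lsq (Yi i)" by (rule Lsq_Yi[OF i])
qed

end


context model
begin

lemma spl_SO:
  fixes G H :: "'w \<Rightarrow> complex"
  assumes "k \<in> Idx" "G \<in> borel_measurable (Sig k)" "H \<in> borel_measurable (Oth k)" "integrable M G" "integrable M H"
  shows "has_bochner_integral M (\<lambda>w. G w * H w) ((\<integral>w. G w \<partial>M) * (\<integral>w. H w \<partial>M))"
  using split[OF assms] by (simp add: has_bochner_integral_iff)

lemma spl_OS:
  fixes G H :: "'w \<Rightarrow> complex"
  assumes "k \<in> Idx" "G \<in> borel_measurable (Oth k)" "H \<in> borel_measurable (Sig k)" "integrable M G" "integrable M H"
  shows "has_bochner_integral M (\<lambda>w. G w * H w) ((\<integral>w. G w \<partial>M) * (\<integral>w. H w \<partial>M))"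
  using split[OF assms(1,3,2,5,4)] by (simp add: has_bochner_integral_iff mult.commute)

lemma Tsq_indep:
  fixes u v :: "'w \<Rightarrow> complex^'n" and A B :: "'w measure" and P1 R1 :: "complex^'n^'d"
  assumes gu: "cgauss M u Su" and gv: "cgauss M v Sv"
    and um[measurable]: "u \<in> borel_measurable A" and vm[measurable]: "v \<in> borel_measurable B"
    and spl: "\<And>G H :: 'w \<Rightarrow> complex. G \<in> borel_measurable A \<Longrightarrow> H \<in> borel_measurable B \<Longrightarrow> integrable M G \<Longrightarrow> integrable M H \<Longrightarrow>
       has_bochner_integral M (\<lambda>w. G w * H w) ((\<integral>w. G w \<partial>M) * (\<integral>w. H w \<partial>M))"
  defines "T \<equiv> \<lambda>w. \<Sum>k\<in>UNIV. cnj (cinner (crow P1 k) (u w)) * cinner (crow R1 k) (v w)"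
  shows "has_bochner_integral M (\<lambda>w. T w * cnj (T w)) (trace ((P1 ** Su ** adjoint_mat P1) ** (R1 ** Sv ** adjoint_mat R1)))"
proof -
  have pw: "T w * cnj (T w) = (\<Sum>k\<in>UNIV. \<Sum>k'\<in>UNIV.
      (cnj (cinner (crow P1 k) (u w)) * cinner (crow P1 k') (u w)) * (cinner (crow R1 k) (v w) * cnj (cinner (crow R1 k') (v w))))" for w
    by (simp add: T_def sum_distrib_left sum_distrib_right mult_ac)
  have trm: "has_bochner_integral M (\<lambda>w. (cnj (cinner (crow P1 k) (u w)) * cinner (crow P1 k') (u w)) * (cinner (crow R1 k) (v w) * cnj (cinner (crow R1 k') (v w))))
     ((P1 ** Su ** adjoint_mat P1) $ k' $ k * (R1 ** Sv ** adjoint_mat R1) $ k $ k')" for k k'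
  proof -
    have h1: "has_bochner_integral M (\<lambda>w. cnj (cinner (crow P1 k) (u w)) * cinner (crow P1 k') (u w)) ((P1 ** Su ** adjoint_mat P1) $ k' $ k)"
      using cgauss.gauss_c2_hb[OF gu, of "crow P1 k'" "crow P1 k"] by (simp add: crow_cinner mult.commute)
    have h2: "has_bochner_integral M (\<lambda>w. cinner (crow R1 k) (v w) * cnj (cinner (crow R1 k') (v w))) ((R1 ** Sv ** adjoint_mat R1) $ k $ k')"
      using cgauss.gauss_c2_hb[OF gv, of "crow R1 k" "crow R1 k'"] by (simp add: crow_cinner)
    have "has_bochner_integral M (\<lambda>w. (cnj (cinner (crow P1 k) (u w)) * cinner (crow P1 k') (u w)) * (cinner (crow R1 k) (v w) * cnj (cinner (crow R1 k') (v w))))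
       ((\<integral>w. cnj (cinner (crow P1 k) (u w)) * cinner (crow P1 k') (u w) \<partial>M) * (\<integral>w. cinner (crow R1 k) (v w) * cnj (cinner (crow R1 k') (v w)) \<partial>M))"
      by (rule spl) (measurable, measurable, use h1 h2 integrable.intros in blast, use h2 integrable.intros in blast)
    thus ?thesis using h1 h2 by (simp add: has_bochner_integral_integral_eq)
  qed
  have "has_bochner_integral M (\<lambda>w. \<Sum>k\<in>UNIV. \<Sum>k'\<in>UNIV.
      (cnj (cinner (crow P1 k) (u w)) * cinner (crow P1 k') (u w)) * (cinner (crow R1 k) (v w) * cnj (cinner (crow R1 k') (v w))))
     (\<Sum>k\<in>UNIV. \<Sum>k'\<in>UNIV. (P1 ** Su ** adjoint_mat P1) $ k' $ k * (R1 ** Sv ** adjoint_mat R1) $ k $ k')"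
    by (intro has_bochner_integral_sum trm)
  thus ?thesis unfolding pw[symmetric] sum_trace .
qed

end


context model
begin

lemma E_T1s: assumes i: "i < L"
  shows "has_bochner_integral M (\<lambda>w. T1s i w * cnj (T1s i w)) (trace (MM ** Cs ** adjoint_mat MM ** Sth))"
proof -
  have "has_bochner_integral M (\<lambda>w. T1s i w * cnj (T1s i w)) (trace ((Pr ** K ** adjoint_mat Pr) ** (Q ** Ss ** adjoint_mat Q)))"
    unfolding T1s_def[abs_def] a_def bs_def
    by (rule Tsq_indep[OF gx gs[OF i] x_Oth ds_Sig spl_OS[OF idx(5)[OF i]]]) auto
  moreover have "trace ((Pr ** K ** adjoint_mat Pr) ** (Q ** Ss ** adjoint_mat Q)) = trace (MM ** Cs ** adjoint_mat MM ** Sth)"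
    unfolding F1 F6 by (rule trace_mul_sym)
  ultimately show ?thesis by simp
qed

lemma E_Tr1: assumes i: "i < L"
  shows "has_bochner_integral M (\<lambda>w. Tr1 i w * cnj (Tr1 i w)) (trace (adjoint_mat MM ** Cr ** MM ** Sth))"
proof -
  have "has_bochner_integral M (\<lambda>w. Tr1 i w * cnj (Tr1 i w)) (trace ((Pr ** Sr ** adjoint_mat Pr) ** (Q ** K ** adjoint_mat Q)))"
    unfolding Tr1_def[abs_def] ar_def b_def
    by (rule Tsq_indep[OF gr[OF i] gx dr_Sig x_Oth spl_SO[OF idx(4)[OF i]]]) auto
  moreover have "trace ((Pr ** Sr ** adjoint_mat Pr) ** (Q ** K ** adjoint_mat Q)) = trace (adjoint_mat MM ** Cr ** MM ** Sth)"
  proof -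
    have "trace (Cr ** (MM ** Sth ** adjoint_mat MM)) = trace ((Cr ** MM ** Sth) ** adjoint_mat MM)"
      by (simp add: matrix_mul_assoc)
    also have "\<dots> = trace (adjoint_mat MM ** (Cr ** MM ** Sth))" by (rule trace_mul_sym)
    finally show ?thesis unfolding PrSr F4 by (simp add: matrix_mul_assoc)
  qed
  ultimately show ?thesis by simp
qed

lemma E_Trs: assumes i: "i < L"
  shows "has_bochner_integral M (\<lambda>w. Trs i w * cnj (Trs i w)) (trace (MM ** Cs ** adjoint_mat MM ** Cr))"
proof -
  have "has_bochner_integral M (\<lambda>w. Trs i w * cnj (Trs i w)) (trace ((Pr ** Sr ** adjoint_mat Pr) ** (Q ** Ss ** adjoint_mat Q)))"
    unfolding Trs_def[abs_def] ar_def bs_def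
    by (rule Tsq_indep[OF gr[OF i] gs[OF i] dr_Oth[OF i] ds_Sig spl_OS[OF idx(5)[OF i]]]) auto
  moreover have "trace ((Pr ** Sr ** adjoint_mat Pr) ** (Q ** Ss ** adjoint_mat Q)) = trace (MM ** Cs ** adjoint_mat MM ** Cr)"
    unfolding PrSr F6 by (rule trace_mul_sym)
  ultimately show ?thesis by simp
qed

lemma E_T11:
  shows "has_bochner_integral M (\<lambda>w. T11 w * cnj (T11 w))
    (trace (MM ** Sth ** adjoint_mat MM ** Sth) + complex_of_real ((cmod (trace (MM ** Sth)))\<^sup>2))"
proof -
  have pw: "T11 w * cnj (T11 w) = (\<Sum>k\<in>UNIV. \<Sum>k'\<in>UNIV.
      cnj (cinner (crow Pr k) (x w)) * cinner (crow Q k) (x w) * cinner (crow Pr k') (x w) * cnj (cinner (crow Q k') (x w)))" for w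
    by (simp add: T11_def a_def b_def sum_distrib_left sum_distrib_right mult_ac)
  have "has_bochner_integral M (\<lambda>w. \<Sum>k\<in>UNIV. \<Sum>k'\<in>UNIV.
      cnj (cinner (crow Pr k) (x w)) * cinner (crow Q k) (x w) * cinner (crow Pr k') (x w) * cnj (cinner (crow Q k') (x w)))
    (\<Sum>k\<in>UNIV. \<Sum>k'\<in>UNIV. cinner (crow Q k) (K *v crow Pr k) * cinner (crow Pr k') (K *v crow Q k')
        + cinner (crow Pr k') (K *v crow Pr k) * cinner (crow Q k) (K *v crow Q k'))"
    by (intro has_bochner_integral_sum cgauss.gauss_c4_hb[OF gx])
  moreover have "(\<Sum>k\<in>UNIV. \<Sum>k'\<in>UNIV. cinner (crow Q k) (K *v crow Pr k) * cinner (crow Pr k') (K *v crow Q k')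
        + cinner (crow Pr k') (K *v crow Pr k) * cinner (crow Q k) (K *v crow Q k'))
      = trace (MM ** Sth ** adjoint_mat MM ** Sth) + complex_of_real ((cmod (trace (MM ** Sth)))\<^sup>2)"
  proof -
    have "(\<Sum>k\<in>UNIV. \<Sum>k'\<in>UNIV. cinner (crow Q k) (K *v crow Pr k) * cinner (crow Pr k') (K *v crow Q k')
        + cinner (crow Pr k') (K *v crow Pr k) * cinner (crow Q k) (K *v crow Q k'))
      = (\<Sum>k\<in>UNIV. \<Sum>k'\<in>UNIV. (MM ** Sth) $ k $ k * (Sth ** adjoint_mat MM) $ k' $ k'
        + Sth $ k' $ k * (MM ** Sth ** adjoint_mat MM) $ k $ k')"
      by (simp add: crow_cinner F1 F2 F3 F4)
    also have "\<dots> = trace (MM ** Sth) * trace (Sth ** adjoint_mat MM) + trace (Sth ** (MM ** Sth ** adjoint_mat MM))"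
      by (simp add: sum.distrib sum_trace trace_def sum_product)
    also have "trace (Sth ** adjoint_mat MM) = cnj (trace (MM ** Sth))"
    proof -
      have "Sth ** adjoint_mat MM = adjoint_mat (MM ** Sth)"
        using hSth by (simp add: adjoint_mult hermitian_def)
      thus ?thesis by (simp add: trace_adjoint)
    qed
    also have "trace (Sth ** (MM ** Sth ** adjoint_mat MM)) = trace (MM ** Sth ** adjoint_mat MM ** Sth)"
      by (rule trace_mul_sym)
    finally show ?thesis by (simp add: mult_cnj_self)
  qed
  ultimately show ?thesis unfolding pw[symmetric] by simp
qed

end


context model
begin

lemma zsplit:
  fixes G H :: "'w \<Rightarrow> complex"
  assumes "k \<in> Idx" "G \<in> borel_measurable (Sig k)" "H \<in> borel_measurable (Oth k)"
    "has_bochner_integral M G 0" "integrable M H"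
  shows "has_bochner_integral M (\<lambda>w. G w * H w) 0"
  using spl_SO[OF assms(1-3) integrable.intros[OF assms(4)] assms(5)] has_bochner_integral_integral_eq[OF assms(4)]
  by simp

lemma E_al: "i < L \<Longrightarrow> has_bochner_integral M (al i) 0"
  using cn1_facts(2)[OF P cna va] by simp
lemma E_al2: "i < L \<Longrightarrow> has_bochner_integral M (\<lambda>w. al i w * cnj (al i w)) (complex_of_real va)"
  using cn1_facts(3)[OF P cna va] by simp
lemma E_be2: "i < L \<Longrightarrow> has_bochner_integral M (\<lambda>w. be i w * cnj (be i w)) (complex_of_real ((cmod mub)\<^sup>2 + vb))"
  using cn1_facts(3)[OF P cnb vb] by simp
lemma E_ar: "i < L \<Longrightarrow> has_bochner_integral M (ar i k) 0"
  unfolding ar_def[abs_def] by (rule cgauss.gauss_c1_hb[OF gr])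
lemma E_bs: "i < L \<Longrightarrow> has_bochner_integral M (bs i k) 0"
  unfolding bs_def[abs_def] by (rule cgauss.gauss_c1_hb[OF gs])

lemma Lsq_bT11: assumes i: "i < L" shows "Lsq (\<lambda>w. cnj (be i w) * T11 w)"
proof -
  have [measurable]: "T11 \<in> borel_measurable (Oth (IBeta i))" by (rule T11_meas, rule x_Oth) simp
  have [measurable]: "be i \<in> borel_measurable (Sig (IBeta i))" by (rule be_Sig)
  show ?thesis
    by (rule Lsq_split[OF idx(3)[OF i]]) (measurable, measurable, rule Lsq_cnj[OF Lsq_be[OF i]], rule Lsq_T11)
qed

lemma Lsq_bT1s: assumes i: "i < L" shows "Lsq (\<lambda>w. cnj (be i w) * T1s i w)"
proof -
  have [measurable]: "T1s i \<in> borel_measurable (Oth (IBeta i))"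
    by (rule T1s_meas; rule x_Oth ds_Oth[OF i]; simp)
  have [measurable]: "be i \<in> borel_measurable (Sig (IBeta i))" by (rule be_Sig)
  show ?thesis
    by (rule Lsq_split[OF idx(3)[OF i]]) (measurable, measurable, rule Lsq_cnj[OF Lsq_be[OF i]], rule Lsq_T1s[OF i])
qed

lemma hb_cnj_swap:
  assumes "has_bochner_integral M (\<lambda>w. f w * cnj (g w)) 0"
  shows "has_bochner_integral M (\<lambda>w. g w * cnj (f w)) 0"
  using has_bochner_integral_cnj[OF assms] by (simp add: mult.commute)

lemma E_Zi: assumes i: "i < L"
  shows "has_bochner_integral M (\<lambda>w. Zi i w * cnj (Zi i w))
     (complex_of_real ((cmod mub)\<^sup>2 + vb) * (trace (MM ** Sth ** adjoint_mat MM ** Sth) + complex_of_real ((cmod (trace (MM ** Sth)))\<^sup>2))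
      + trace (adjoint_mat MM ** Cr ** MM ** Sth))"
proof -
  define A where "A = (\<lambda>w. cnj (be i w) * T11 w)"
  have pw: "Zi i w * cnj (Zi i w) = (be i w * cnj (be i w)) * (T11 w * cnj (T11 w)) + A w * cnj (Tr1 i w)
      + Tr1 i w * cnj (A w) + Tr1 i w * cnj (Tr1 i w)" for w
    by (simp add: Zi_def A_def algebra_simps)
  have t1: "has_bochner_integral M (\<lambda>w. (be i w * cnj (be i w)) * (T11 w * cnj (T11 w)))
     (complex_of_real ((cmod mub)\<^sup>2 + vb) * (trace (MM ** Sth ** adjoint_mat MM ** Sth) + complex_of_real ((cmod (trace (MM ** Sth)))\<^sup>2)))"
  proof -
    have [measurable]: "T11 \<in> borel_measurable (Oth (IBeta i))" by (rule T11_meas, rule x_Oth) simp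
    have [measurable]: "be i \<in> borel_measurable (Sig (IBeta i))" by (rule be_Sig)
    have "has_bochner_integral M (\<lambda>w. (be i w * cnj (be i w)) * (T11 w * cnj (T11 w)))
       ((\<integral>w. be i w * cnj (be i w) \<partial>M) * (\<integral>w. T11 w * cnj (T11 w) \<partial>M))"
      by (rule spl_SO[OF idx(3)[OF i]]) (measurable, measurable, rule integrable.intros[OF E_be2[OF i]], rule integrable.intros[OF E_T11])
    thus ?thesis using has_bochner_integral_integral_eq[OF E_be2[OF i]] has_bochner_integral_integral_eq[OF E_T11] by simp
  qed
  have t2: "has_bochner_integral M (\<lambda>w. A w * cnj (Tr1 i w)) 0"
  proof -
    have pw2: "A w * cnj (Tr1 i w) = (\<Sum>k\<in>UNIV. ar i k w * (A w * cnj (b k w)))" for w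
      by (simp add: Tr1_def sum_distrib_left mult_ac)
    have trm: "has_bochner_integral M (\<lambda>w. ar i k w * (A w * cnj (b k w))) 0" for k
    proof -
      have [measurable]: "b k \<in> borel_measurable (Oth (IDr i))" by (rule b_meas, rule x_Oth) simp
      have [measurable]: "A \<in> borel_measurable (Oth (IDr i))"
        unfolding A_def by (rule borel_measurable_times, rule meas_cnj, rule be_Oth[OF i], simp, rule T11_meas, rule x_Oth, simp)
      have [measurable]: "ar i k \<in> borel_measurable (Sig (IDr i))" by (rule ar_meas[OF dr_Sig])
      show ?thesis
        by (rule zsplit[OF idx(4)[OF i]]) (measurable, measurable, rule E_ar[OF i],
            rule Lsq_mult_cnj_int[OF Lsq_bT11[OF i, folded A_def] Lsq_b])
    qed
    have "has_bochner_integral M (\<lambda>w. \<Sum>k\<in>UNIV. ar i k w * (A w * cnj (b k w))) (\<Sum>k\<in>(UNIV::'d set). 0)"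
      by (intro has_bochner_integral_sum trm)
    thus ?thesis unfolding pw2 by simp
  qed
  have "has_bochner_integral M (\<lambda>w. (be i w * cnj (be i w)) * (T11 w * cnj (T11 w)) + A w * cnj (Tr1 i w)
      + Tr1 i w * cnj (A w) + Tr1 i w * cnj (Tr1 i w))
     (complex_of_real ((cmod mub)\<^sup>2 + vb) * (trace (MM ** Sth ** adjoint_mat MM ** Sth) + complex_of_real ((cmod (trace (MM ** Sth)))\<^sup>2))
      + 0 + 0 + trace (adjoint_mat MM ** Cr ** MM ** Sth))"
    by (intro has_bochner_integral_add t1 t2 hb_cnj_swap E_Tr1[OF i])
  thus ?thesis unfolding pw[symmetric] by simp
qed

lemma E_Yi: assumes i: "i < L"
  shows "has_bochner_integral M (\<lambda>w. Yi i w * cnj (Yi i w))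
     (complex_of_real ((cmod mub)\<^sup>2 + vb) * trace (MM ** Cs ** adjoint_mat MM ** Sth) + trace (MM ** Cs ** adjoint_mat MM ** Cr))"
proof -
  define A where "A = (\<lambda>w. cnj (be i w) * T1s i w)"
  have pw: "Yi i w * cnj (Yi i w) = (be i w * cnj (be i w)) * (T1s i w * cnj (T1s i w)) + A w * cnj (Trs i w)
      + Trs i w * cnj (A w) + Trs i w * cnj (Trs i w)" for w
    by (simp add: Yi_def A_def algebra_simps)
  have t1: "has_bochner_integral M (\<lambda>w. (be i w * cnj (be i w)) * (T1s i w * cnj (T1s i w)))
     (complex_of_real ((cmod mub)\<^sup>2 + vb) * trace (MM ** Cs ** adjoint_mat MM ** Sth))"
  proof -
    have [measurable]: "T1s i \<in> borel_measurable (Oth (IBeta i))"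
      by (rule T1s_meas; rule x_Oth ds_Oth[OF i]; simp)
    have [measurable]: "be i \<in> borel_measurable (Sig (IBeta i))" by (rule be_Sig)
    have "has_bochner_integral M (\<lambda>w. (be i w * cnj (be i w)) * (T1s i w * cnj (T1s i w)))
       ((\<integral>w. be i w * cnj (be i w) \<partial>M) * (\<integral>w. T1s i w * cnj (T1s i w) \<partial>M))"
      by (rule spl_SO[OF idx(3)[OF i]]) (measurable, measurable, rule integrable.intros[OF E_be2[OF i]], rule integrable.intros[OF E_T1s[OF i]])
    thus ?thesis using has_bochner_integral_integral_eq[OF E_be2[OF i]] has_bochner_integral_integral_eq[OF E_T1s[OF i]] by simp
  qed
  have t2: "has_bochner_integral M (\<lambda>w. A w * cnj (Trs i w)) 0"
  proof -
    have pw2: "A w * cnj (Trs i w) = (\<Sum>k\<in>UNIV. ar i k w * (A w * cnj (bs i k w)))" for w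
      by (simp add: Trs_def sum_distrib_left mult_ac)
    have trm: "has_bochner_integral M (\<lambda>w. ar i k w * (A w * cnj (bs i k w))) 0" for k
    proof -
      have [measurable]: "bs i k \<in> borel_measurable (Oth (IDr i))" by (rule bs_meas, rule ds_Oth[OF i]) simp
      have [measurable]: "A \<in> borel_measurable (Oth (IDr i))"
        unfolding A_def by (rule borel_measurable_times, rule meas_cnj, rule be_Oth[OF i], simp, rule T1s_meas; rule x_Oth ds_Oth[OF i]; simp)
      have [measurable]: "ar i k \<in> borel_measurable (Sig (IDr i))" by (rule ar_meas[OF dr_Sig])
      show ?thesis
        by (rule zsplit[OF idx(4)[OF i]]) (measurable, measurable, rule E_ar[OF i],
            rule Lsq_mult_cnj_int[OF Lsq_bT1s[OF i, folded A_def] Lsq_bs[OF i]])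
    qed
    have "has_bochner_integral M (\<lambda>w. \<Sum>k\<in>UNIV. ar i k w * (A w * cnj (bs i k w))) (\<Sum>k\<in>(UNIV::'d set). 0)"
      by (intro has_bochner_integral_sum trm)
    thus ?thesis unfolding pw2 by simp
  qed
  have "has_bochner_integral M (\<lambda>w. (be i w * cnj (be i w)) * (T1s i w * cnj (T1s i w)) + A w * cnj (Trs i w)
      + Trs i w * cnj (A w) + Trs i w * cnj (Trs i w))
     (complex_of_real ((cmod mub)\<^sup>2 + vb) * trace (MM ** Cs ** adjoint_mat MM ** Sth) + 0 + 0 + trace (MM ** Cs ** adjoint_mat MM ** Cr))"
    by (intro has_bochner_integral_add t1 t2 hb_cnj_swap E_Trs[OF i])
  thus ?thesis unfolding pw[symmetric] by simp
qed

end


context model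
begin

lemma Oth_facts:
  assumes i: "i < L" and k: "k \<noteq> IX" "k \<noteq> IAlpha i" "k \<noteq> IBeta i" "k \<noteq> IDr i" "k \<noteq> IDs i"
  shows "cc h i \<in> borel_measurable (Oth k)" "Zi i \<in> borel_measurable (Oth k)" "R i l \<in> borel_measurable (Oth k)"
proof -
  have m: "x \<in> borel_measurable (Oth k)" "al i \<in> borel_measurable (Oth k)" "be i \<in> borel_measurable (Oth k)"
    "dr i \<in> borel_measurable (Oth k)" "ds i \<in> borel_measurable (Oth k)"
    using x_Oth[OF k(1)] al_Oth[OF i k(2)] be_Oth[OF i k(3)] dr_Oth[OF i k(4)] ds_Oth[OF i k(5)] by auto
  show "cc h i \<in> borel_measurable (Oth k)" by (rule cc_meas[OF m(1) m(2) m(3) m(4) m(5)])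
  show "Zi i \<in> borel_measurable (Oth k)" by (rule Zi_meas[OF m(1) m(3) m(4)])
  show "R i l \<in> borel_measurable (Oth k)" by (rule R_meas[OF m(1) m(3) m(4)])
qed

lemma E_cc_mean: assumes i: "i < L" shows "has_bochner_integral M (cc h i) 0"
proof -
  have pw: "cc h i w = (if h then al i w * Zi i w else 0) + (\<Sum>k\<in>UNIV. bs i k w * cnj (R i k w))" for w
    by (simp add: cc_def Yi_R mult.commute)
  have t1: "has_bochner_integral M (\<lambda>w. if h then al i w * Zi i w else 0) 0"
  proof (cases h)
    case True
    have [measurable]: "Zi i \<in> borel_measurable (Oth (IAlpha i))"
      by (rule Zi_meas; rule x_Oth be_Oth[OF i] dr_Oth[OF i]; simp)
    have [measurable]: "al i \<in> borel_measurable (Sig (IAlpha i))" by (rule al_Sig)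
    have "has_bochner_integral M (\<lambda>w. al i w * Zi i w) 0"
      by (rule zsplit[OF idx(2)[OF i]]) (measurable, measurable, rule E_al[OF i], rule Lsq_int[OF Lsq_Zi[OF i]])
    thus ?thesis using True by simp
  qed (simp add: has_bochner_integral_zero)
  have trm: "has_bochner_integral M (\<lambda>w. bs i k w * cnj (R i k w)) 0" for k
  proof -
    have [measurable]: "R i k \<in> borel_measurable (Oth (IDs i))"
      by (rule R_meas; rule x_Oth be_Oth[OF i] dr_Oth[OF i]; simp)
    have [measurable]: "bs i k \<in> borel_measurable (Sig (IDs i))" by (rule bs_meas[OF ds_Sig])
    show ?thesis
      by (rule zsplit[OF idx(5)[OF i]]) (measurable, measurable, rule E_bs[OF i], rule Lsq_int[OF Lsq_cnj[OF Lsq_R[OF i]]])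
  qed
  have "has_bochner_integral M (\<lambda>w. (if h then al i w * Zi i w else 0) + (\<Sum>k\<in>UNIV. bs i k w * cnj (R i k w)))
      (0 + (\<Sum>k\<in>(UNIV::'d set). 0))"
    by (intro has_bochner_integral_add t1 has_bochner_integral_sum trm)
  thus ?thesis unfolding pw[symmetric] by simp
qed

lemma E_cc_False: assumes i: "i < L"
  shows "has_bochner_integral M (\<lambda>w. cc False i w * cnj (cc False i w))
     (complex_of_real ((cmod mub)\<^sup>2 + vb) * trace (MM ** Cs ** adjoint_mat MM ** Sth) + trace (MM ** Cs ** adjoint_mat MM ** Cr))"
  using E_Yi[OF i] by (simp add: cc_def)

lemma E_cc_True: assumes i: "i < L"
  shows "has_bochner_integral M (\<lambda>w. cc True i w * cnj (cc True i w))
     (complex_of_real ((cmod mub)\<^sup>2 + vb) * trace (MM ** Cs ** adjoint_mat MM ** Sth) + trace (MM ** Cs ** adjoint_mat MM ** Cr)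
      + complex_of_real va * trace (adjoint_mat MM ** Cr ** MM ** Sth)
      + complex_of_real (va * ((cmod mub)\<^sup>2 + vb)) * (trace (MM ** Sth ** adjoint_mat MM ** Sth) + complex_of_real ((cmod (trace (MM ** Sth)))\<^sup>2)))"
proof -
  define A where "A = (\<lambda>w. al i w * Zi i w)"
  have pw: "cc True i w * cnj (cc True i w) = (al i w * cnj (al i w)) * (Zi i w * cnj (Zi i w)) + al i w * (Zi i w * cnj (Yi i w))
      + Yi i w * cnj (A w) + Yi i w * cnj (Yi i w)" for w
    by (simp add: cc_def A_def distrib_left distrib_right mult_ac)
  have [measurable]: "Zi i \<in> borel_measurable (Oth (IAlpha i))"
    by (rule Zi_meas; rule x_Oth be_Oth[OF i] dr_Oth[OF i]; simp)
  have [measurable]: "Yi i \<in> borel_measurable (Oth (IAlpha i))"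
    by (rule Yi_meas; rule x_Oth be_Oth[OF i] dr_Oth[OF i] ds_Oth[OF i]; simp)
  have [measurable]: "al i \<in> borel_measurable (Sig (IAlpha i))" by (rule al_Sig)
  have t1: "has_bochner_integral M (\<lambda>w. (al i w * cnj (al i w)) * (Zi i w * cnj (Zi i w)))
     ((\<integral>w. al i w * cnj (al i w) \<partial>M) * (\<integral>w. Zi i w * cnj (Zi i w) \<partial>M))"
    by (rule spl_SO[OF idx(2)[OF i]]) (measurable, measurable, rule integrable.intros[OF E_al2[OF i]], rule integrable.intros[OF E_Zi[OF i]])
  have t2: "has_bochner_integral M (\<lambda>w. al i w * (Zi i w * cnj (Yi i w))) 0"
    by (rule zsplit[OF idx(2)[OF i]]) (measurable, measurable, rule E_al[OF i], rule Lsq_mult_cnj_int[OF Lsq_Zi[OF i] Lsq_Yi[OF i]])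
  have t3: "has_bochner_integral M (\<lambda>w. Yi i w * cnj (A w)) 0"
    by (rule hb_cnj_swap) (use t2 in \<open>simp add: A_def mult.assoc\<close>)
  have hb: "has_bochner_integral M (\<lambda>w. (al i w * cnj (al i w)) * (Zi i w * cnj (Zi i w)) + al i w * (Zi i w * cnj (Yi i w))
      + Yi i w * cnj (A w) + Yi i w * cnj (Yi i w))
     ((\<integral>w. al i w * cnj (al i w) \<partial>M) * (\<integral>w. Zi i w * cnj (Zi i w) \<partial>M) + 0 + 0
      + (complex_of_real ((cmod mub)\<^sup>2 + vb) * trace (MM ** Cs ** adjoint_mat MM ** Sth) + trace (MM ** Cs ** adjoint_mat MM ** Cr)))"
    by (intro has_bochner_integral_add t1 t2 t3 E_Yi[OF i])
  have gen: "\<And>a b d e s0::complex. a * (b * d + e) + 0 + 0 + s0 = s0 + a * e + (a * b) * d"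
    by (simp add: algebra_simps)
  have eqv: "(\<integral>w. al i w * cnj (al i w) \<partial>M) * (\<integral>w. Zi i w * cnj (Zi i w) \<partial>M) + 0 + 0
      + (complex_of_real ((cmod mub)\<^sup>2 + vb) * trace (MM ** Cs ** adjoint_mat MM ** Sth) + trace (MM ** Cs ** adjoint_mat MM ** Cr))
    = complex_of_real ((cmod mub)\<^sup>2 + vb) * trace (MM ** Cs ** adjoint_mat MM ** Sth) + trace (MM ** Cs ** adjoint_mat MM ** Cr)
      + complex_of_real va * trace (adjoint_mat MM ** Cr ** MM ** Sth)
      + complex_of_real (va * ((cmod mub)\<^sup>2 + vb)) * (trace (MM ** Sth ** adjoint_mat MM ** Sth) + complex_of_real ((cmod (trace (MM ** Sth)))\<^sup>2))"
    unfolding has_bochner_integral_integral_eq[OF E_al2[OF i]] has_bochner_integral_integral_eq[OF E_Zi[OF i]]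
      of_real_mult[of va] by (rule gen)
  have feq: "(\<lambda>w. cc True i w * cnj (cc True i w)) = (\<lambda>w. (al i w * cnj (al i w)) * (Zi i w * cnj (Zi i w)) + al i w * (Zi i w * cnj (Yi i w))
      + Yi i w * cnj (A w) + Yi i w * cnj (Yi i w))"
    by (rule ext) (rule pw)
  show ?thesis unfolding feq eqv[symmetric] by (rule hb)
qed

lemma E_cc_cov: assumes i: "i < L" and j: "j < L" and ij: "i \<noteq> j"
  shows "has_bochner_integral M (\<lambda>w. cc h i w * cnj (cc h j w)) 0"
proof -
  have pw: "cc h i w * cnj (cc h j w) = (if h then al i w * (Zi i w * cnj (cc h j w)) else 0)
     + (\<Sum>k\<in>UNIV. bs i k w * (cnj (R i k w) * cnj (cc h j w)))" for w
    by (cases h) (simp_all add: cc_def[of _ i] Yi_R sum_distrib_left distrib_left distrib_right mult_ac)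
  have t1: "has_bochner_integral M (\<lambda>w. if h then al i w * (Zi i w * cnj (cc h j w)) else 0) 0"
  proof (cases h)
    case True
    have [measurable]: "Zi i \<in> borel_measurable (Oth (IAlpha i))"
      by (rule Zi_meas; rule x_Oth be_Oth[OF i] dr_Oth[OF i]; simp)
    have [measurable]: "cc h j \<in> borel_measurable (Oth (IAlpha i))"
      by (rule Oth_facts(1)[OF j]) (use ij in auto)
    have [measurable]: "al i \<in> borel_measurable (Sig (IAlpha i))" by (rule al_Sig)
    have "has_bochner_integral M (\<lambda>w. al i w * (Zi i w * cnj (cc h j w))) 0"
      by (rule zsplit[OF idx(2)[OF i]]) (measurable, measurable, rule E_al[OF i], rule Lsq_mult_cnj_int[OF Lsq_Zi[OF i] Lsq_cc[OF j]])
    thus ?thesis using True by simp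
  qed (simp add: has_bochner_integral_zero)
  have trm: "has_bochner_integral M (\<lambda>w. bs i k w * (cnj (R i k w) * cnj (cc h j w))) 0" for k
  proof -
    have [measurable]: "R i k \<in> borel_measurable (Oth (IDs i))"
      by (rule R_meas; rule x_Oth be_Oth[OF i] dr_Oth[OF i]; simp)
    have [measurable]: "cc h j \<in> borel_measurable (Oth (IDs i))"
      by (rule Oth_facts(1)[OF j]) (use ij in auto)
    have [measurable]: "bs i k \<in> borel_measurable (Sig (IDs i))" by (rule bs_meas[OF ds_Sig])
    show ?thesis
      by (rule zsplit[OF idx(5)[OF i]]) (measurable, measurable, rule E_bs[OF i],
          rule Lsq_prod_int[OF Lsq_cnj[OF Lsq_R[OF i]] Lsq_cnj[OF Lsq_cc[OF j]]])
  qed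
  have "has_bochner_integral M (\<lambda>w. (if h then al i w * (Zi i w * cnj (cc h j w)) else 0)
     + (\<Sum>k\<in>UNIV. bs i k w * (cnj (R i k w) * cnj (cc h j w)))) (0 + (\<Sum>k\<in>(UNIV::'d set). 0))"
    by (intro has_bochner_integral_add t1 has_bochner_integral_sum trm)
  thus ?thesis unfolding pw[symmetric] by simp
qed

end


theorem proposition1:
  fixes M :: "'w measure" and L :: nat
    and U :: "complex^'d^'n" and Sth :: "complex^'d^'d"
    and Sr Ss :: "complex^'n^'n"
    and va vb :: real and mub :: complex
    and x :: "'w \<Rightarrow> complex^'n"
    and al be :: "nat \<Rightarrow> 'w \<Rightarrow> complex"
    and dr ds :: "nat \<Rightarrow> 'w \<Rightarrow> complex^'n"
  assumes "prob_space M"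
    and "full_column_rank U"
    and "hermitian Sth" and "pos_semidef Sth"
    and "pos_def Sr" and "pos_def Ss"
    and "va \<ge> 0" and "vb \<ge> 0"
    and "is_CN M x 0 (U ** Sth ** adjoint_mat U)"
    and "\<And>i. i < L \<Longrightarrow> is_CN1 M (al i) 0 va"
    and "\<And>i. i < L \<Longrightarrow> is_CN1 M (be i) mub vb"
    and "\<And>i. i < L \<Longrightarrow> is_CN M (dr i) 0 Sr"
    and "\<And>i. i < L \<Longrightarrow> is_CN M (ds i) 0 Ss"
    and "model_indep M L x al be dr ds"
  defines "c \<equiv> \<lambda>h i w. c_stat U Sr Ss (meas_r x be dr i w) (meas_s h x al ds i w)"
    and "s0 \<equiv> (complex_of_real ((cmod mub)\<^sup>2 + vb)) * trace ((M_U U Sr Ss) ** C_mat U Ss ** adjoint_mat (M_U U Sr Ss) ** Sth)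
              + trace ((M_U U Sr Ss) ** C_mat U Ss ** adjoint_mat (M_U U Sr Ss) ** C_mat U Sr)"
  shows "(\<forall>i<L. complex_of_real (cvar M (c False i)) = s0)
     \<and> (\<forall>i<L. complex_of_real (cvar M (c True i)) =
           s0 + complex_of_real va * trace (adjoint_mat (M_U U Sr Ss) ** C_mat U Sr ** (M_U U Sr Ss) ** Sth)
              + complex_of_real (va * ((cmod mub)\<^sup>2 + vb)) *
                  (trace ((M_U U Sr Ss) ** Sth ** adjoint_mat (M_U U Sr Ss) ** Sth)
                   + complex_of_real ((cmod (trace ((M_U U Sr Ss) ** Sth)))\<^sup>2)))
     \<and> (\<forall>h. \<forall>i<L. \<forall>j<L. i \<noteq> j \<longrightarrow> ccov M (c h i) (c h j) = 0)"
proof -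
  interpret model M L U Sth Sr Ss va vb mub x al be dr ds
    by (rule model.intro) (use assms in auto)
  have cc_eq: "c h i = cc h i" for h i
    by (rule ext) (simp add: c_def c_formula)
  have var: "complex_of_real (cvar M (cc h i)) = (\<integral>w. cc h i w * cnj (cc h i w) \<partial>M)" if i: "i < L" for h i
  proof -
    have "complex_of_real (cvar M (cc h i)) = complex_of_real (\<integral>w. (cmod (cc h i w))\<^sup>2 \<partial>M)"
      unfolding cvar_def has_bochner_integral_integral_eq[OF E_cc_mean[OF i]] by simp
    also have "\<dots> = (\<integral>w. complex_of_real ((cmod (cc h i w))\<^sup>2) \<partial>M)" by (rule integral_complex_of_real[symmetric])
    also have "\<dots> = (\<integral>w. cc h i w * cnj (cc h i w) \<partial>M)" by (simp only: mult_cnj_self)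
    finally show ?thesis .
  qed
  have s0eq: "s0 = complex_of_real ((cmod mub)\<^sup>2 + vb) * trace (MM ** Cs ** adjoint_mat MM ** Sth) + trace (MM ** Cs ** adjoint_mat MM ** Cr)"
    by (simp add: s0_def MM_def Cs_def Cr_def)
  show ?thesis
  proof (intro conjI allI impI)
    fix i assume i: "i < L"
    show "complex_of_real (cvar M (c False i)) = s0"
      unfolding cc_eq var[OF i] s0eq by (rule has_bochner_integral_integral_eq[OF E_cc_False[OF i]])
  next
    fix i assume i: "i < L"
    show "complex_of_real (cvar M (c True i)) =
           s0 + complex_of_real va * trace (adjoint_mat (M_U U Sr Ss) ** C_mat U Sr ** (M_U U Sr Ss) ** Sth)
              + complex_of_real (va * ((cmod mub)\<^sup>2 + vb)) *
                  (trace ((M_U U Sr Ss) ** Sth ** adjoint_mat (M_U U Sr Ss) ** Sth)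
                   + complex_of_real ((cmod (trace ((M_U U Sr Ss) ** Sth)))\<^sup>2))"
      unfolding cc_eq var[OF i] s0eq MM_def[symmetric] Cr_def[symmetric]
      by (rule has_bochner_integral_integral_eq[OF E_cc_True[OF i]])
  next
    fix h i j assume i: "i < L" and j: "j < L" and ij: "i \<noteq> j"
    show "ccov M (c h i) (c h j) = 0"
      unfolding cc_eq ccov_def has_bochner_integral_integral_eq[OF E_cc_mean[OF i]]
        has_bochner_integral_integral_eq[OF E_cc_mean[OF j]]
      using has_bochner_integral_integral_eq[OF E_cc_cov[OF i j ij]] by simp
  qed
qed


end
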